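(* Let $a>0$. For every $\psi\in\mathcal D[0,\infty)$, set $\bar\phi\doteq\Lambda_a(\Gamma_0(\psi))$ and $\bar\eta\doteq\bar\phi-\psi$. Then $(\bar\phi,\bar\eta)$ solves the Skorokhod problem on $[0,a]$ for $\psi$. Consequently $\Gamma_{0,a}=\Lambda_a\circ\Gamma_0$ on $\mathcal D[0,\infty)$.
   Context: $\mathcal D[0,\infty)$ is the space of right-continuous functions $[0,\infty)\to\mathbb R$ with left limits; $\mathcal I[0,\infty)$ and $\mathcal{BV}[0,\infty)$ are its subsets of nondecreasing functions and of functions of bounded variation on every compact interval. Notation: $x^+=\max(x,0)$, $x\wedge y=\min(x,y)$. The map $\Gamma_0:\mathcal D[0,\infty)\to\mathcal D[0,\infty)$ is $\Gamma_0(\psi)(t)=\psi(t)+\sup_{s\in[0,t]}[-\psi(s)]^+$. For $a>0$, $\Lambda_a:\mathcal D[0,\infty)\to\mathcal D[0,\infty)$ is $\Lambda_a(\phi)(t)=\phi(t)-\sup_{s\in[0,t]}\big[(\phi(s)-a)^+\wedge\inf_{u\in[s,t]}\phi(u)\big]$. Skorokhod problem on $[0,a]$ for $\psi\in\mathcal D[0,\infty)$: a pair $(\bar\phi,\bar\eta)\in\mathcal D[0,\infty)\times\mathcal{BV}[0,\infty)$ such that (1) $\bar\phi(t)=\psi(t)+\bar\eta(t)\in[0,a]$ for all $t\ge0$; (2) $\bar\eta=\bar\eta_\ell-\bar\eta_u$ with $\bar\eta_\ell,\bar\eta_u\in\mathcal I[0,\infty)$, $\bar\eta_\ell(0),\bar\eta_u(0)\ge0$,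 using the convention $\bar\eta(0-)=\bar\eta_\ell(0-)=\bar\eta_u(0-)=0$ (so the associated Lebesgue–Stieltjes measures on $[0,\infty)$ may have an atom at $0$), and $\int_{[0,\infty)}\mathbb I_{\{\bar\phi(s)>0\}}\,d\bar\eta_\ell(s)=0$, $\int_{[0,\infty)}\mathbb I_{\{\bar\phi(s)<a\}}\,d\bar\eta_u(s)=0$. Such a solution exists and is unique; $\Gamma_{0,a}(\psi)$ denotes its first component $\bar\phi$. *)

theory Defs
  imports "HOL-Analysis.Analysis"
begin

text \<open>Functions on [0,oo) are represented as real => real; only values at t >= 0 matter.\<close>

definition cadlag :: "(real \<Rightarrow> real) \<Rightarrow> bool" where
  "cadlag f \<longleftrightarrow> (\<forall>t\<ge>0. continuous (at_right t) f) \<and>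
                  (\<forall>t>0. \<exists>l. (f \<longlongrightarrow> l) (at_left t))"

definition nondecr :: "(real \<Rightarrow> real) \<Rightarrow> bool" where
  "nondecr f \<longleftrightarrow> cadlag f \<and> mono_on {0..} f"

definition bv :: "(real \<Rightarrow> real) \<Rightarrow> bool" where
  "bv f \<longleftrightarrow> cadlag f \<and> (\<forall>T\<ge>0. \<exists>B. \<forall>n (s::nat \<Rightarrow> real).
       s 0 = 0 \<and> s n = T \<and> (\<forall>i<n. s i \<le> s (Suc i)) \<longrightarrow>
       (\<Sum>i<n. \<bar>f (s (Suc i)) - f (s i)\<bar>) \<le> B)"

text \<open>Extension by 0 to negative times: encodes the convention F(0-) = 0,
  so the Lebesgue-Stieltjes measure of F on [0,oo) may have an atom F(0) at 0.\<close>
definition ext0 :: "(real \<Rightarrow> real) \<Rightarrow> real \<Rightarrow> real" where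
  "ext0 F t = (if t < 0 then 0 else F t)"

definition LS_null :: "(real \<Rightarrow> real) \<Rightarrow> real set \<Rightarrow> bool" where
  "LS_null F A \<longleftrightarrow> A \<in> sets borel \<and> emeasure (interval_measure (ext0 F)) A = 0"

definition Gamma0 :: "(real \<Rightarrow> real) \<Rightarrow> real \<Rightarrow> real" where
  "Gamma0 \<psi> t = \<psi> t + (SUP s\<in>{0..t}. max (- \<psi> s) 0)"

definition Lambda :: "real \<Rightarrow> (real \<Rightarrow> real) \<Rightarrow> real \<Rightarrow> real" where
  "Lambda a \<phi> t = \<phi> t -
     (SUP s\<in>{0..t}. min (max (\<phi> s - a) 0) (INF u\<in>{s..t}. \<phi> u))"

definition skorokhod :: "real \<Rightarrow> (real \<Rightarrow> real) \<Rightarrow> (real \<Rightarrow> real) \<Rightarrow> (real \<Rightarrow> real) \<Rightarrow> bool" where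
  "skorokhod a \<psi> \<phi> \<eta> \<longleftrightarrow> cadlag \<phi> \<and> bv \<eta> \<and>
     (\<forall>t\<ge>0. \<phi> t = \<psi> t + \<eta> t \<and> 0 \<le> \<phi> t \<and> \<phi> t \<le> a) \<and>
     (\<exists>\<eta>l \<eta>u. nondecr \<eta>l \<and> nondecr \<eta>u \<and> \<eta>l 0 \<ge> 0 \<and> \<eta>u 0 \<ge> 0 \<and>
        (\<forall>t\<ge>0. \<eta> t = \<eta>l t - \<eta>u t) \<and>
        LS_null \<eta>l {s. 0 \<le> s \<and> \<phi> s > 0} \<and>
        LS_null \<eta>u {s. 0 \<le> s \<and> \<phi> s < a})"

definition Gamma0a :: "real \<Rightarrow> (real \<Rightarrow> real) \<Rightarrow> real \<Rightarrow> real" where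
  "Gamma0a a \<psi> t = (THE x. \<exists>\<phi> \<eta>. skorokhod a \<psi> \<phi> \<eta> \<and> \<phi> t = x)"

end

theory Submission
  imports Defs
begin


fun nv :: "(real \<Rightarrow> real) \<Rightarrow> real list \<Rightarrow> real" where
  "nv f (x # y # l) = max (f x - f y) 0 + nv f (y # l)"
| "nv f _ = 0"

lemma nv_Cons: "nv f (a # l) = (case l of [] \<Rightarrow> 0 | b # _ \<Rightarrow> max (f a - f b) 0) + nv f l"
  by (cases l) auto

lemma nv_nonneg: "nv f l \<ge> 0"
  by (induction f l rule: nv.induct) auto

lemma nv_append: "nv f (xs @ v # ys) = nv f (xs @ [v]) + nv f (v # ys)"
proof (induction xs)
  case Nil then show ?case by simp
next
  case (Cons a xs)
  then show ?case by (cases xs) (auto simp: nv_Cons)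
qed

lemma nv_const: "\<forall>x\<in>set l. x = c \<Longrightarrow> nv f l = 0"
  by (induction f l rule: nv.induct) auto

definition chain :: "real \<Rightarrow> real \<Rightarrow> real list \<Rightarrow> bool" where
  "chain u v l \<longleftrightarrow> l \<noteq> [] \<and> hd l = u \<and> last l = v \<and> sorted l"

lemma chain_two: "u \<le> v \<Longrightarrow> chain u v [u, v]"
  by (auto simp: chain_def)


lemma sorted_le_last: "sorted (l::real list) \<Longrightarrow> x \<in> set l \<Longrightarrow> x \<le> last l"
proof (induction l)
  case Nil then show ?case by simp
next
  case (Cons a l)
  show ?case
  proof (cases "l = []")
    case True then show ?thesis using Cons.prems by simp
  next
    case False
    have "a \<le> last l" using Cons.prems(1) False last_in_set by auto
    then show ?thesis using Cons False by auto
  qed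
qed

lemma sorted_hd_le: "sorted (l::real list) \<Longrightarrow> x \<in> set l \<Longrightarrow> hd l \<le> x"
  by (cases l) auto

lemma chain_mem: "chain u v l \<Longrightarrow> x \<in> set l \<Longrightarrow> u \<le> x \<and> x \<le> v"
  unfolding chain_def using sorted_le_last sorted_hd_le by metis

lemma chain_le: "chain u v l \<Longrightarrow> u \<le> v"
  using chain_mem[of u v l "hd l"] unfolding chain_def by auto

lemma chain_same: "chain u u l \<Longrightarrow> nv f l = 0"
proof -
  assume c: "chain u u l"
  have "\<forall>x\<in>set l. x = u"
  proof
    fix x assume "x \<in> set l"
    from chain_mem[OF c this] show "x = u" by simp
  qed
  then show ?thesis by (rule nv_const)
qed

lemma chain_concat:
  assumes "chain u v l1" "chain v w l2"
  shows "chain u w (l1 @ tl l2) \<and> nv f (l1 @ tl l2) = nv f l1 + nv f l2"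
proof -
  obtain r where l2: "l2 = v # r" using assms(2) unfolding chain_def by (metis hd_Cons_tl)
  have l1: "l1 = butlast l1 @ [v]" using assms(1) unfolding chain_def by (metis append_butlast_last_id)
  have nv: "nv f (l1 @ tl l2) = nv f l1 + nv f l2"
    using nv_append[of f "butlast l1" v r] l1 l2 by (metis append.assoc append_Cons append_Nil list.sel(3))
  have "sorted (l1 @ r)"
  proof -
    have "sorted l1" "sorted r" using assms l2 unfolding chain_def by auto
    moreover have "\<forall>x\<in>set l1. \<forall>y\<in>set r. x \<le> y"
      using chain_mem[OF assms(1)] assms(2) l2 unfolding chain_def by fastforce
    ultimately show ?thesis by (simp add: sorted_append)
  qed
  moreover have "last (l1 @ r) = w"
    using assms l2 unfolding chain_def by (cases "r = []") auto
  moreover have "hd (l1 @ r) = u" using assms unfolding chain_def by simp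
  moreover have "l1 @ r \<noteq> []" using assms(1) unfolding chain_def by simp
  ultimately have "chain u w (l1 @ tl l2)" unfolding chain_def l2 by (simp only: list.sel(3)) simp
  then show ?thesis using nv by blast
qed

lemma chain_split:
  assumes "chain u w l" "u \<le> v" "v \<le> w"
  shows "\<exists>l1 l2. chain u v l1 \<and> chain v w l2 \<and> nv f l \<le> nv f l1 + nv f l2"
  using assms
proof (induction l arbitrary: u)
  case Nil then show ?case by (simp add: chain_def)
next
  case (Cons a r)
  note prems = Cons.prems
  note IH = Cons.IH
  have a: "a = u" using prems unfolding chain_def by simp
  show ?case
  proof (cases "r = []")
    case True
    then have "u = w" using prems a unfolding chain_def by simp
    then have "v = u" using prems by simp
    then show ?thesis using \<open>u = w\<close> a True
      by (intro exI[of _ "[u]"]) (auto simp: chain_def)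
  next
    case False
    then obtain c r' where rc: "r = c # r'" by (cases r) auto
    have cr: "chain c w r" using prems(1) unfolding chain_def rc by simp
    have uc: "u \<le> c" using prems(1) a unfolding chain_def rc by simp
    show ?thesis
    proof (cases "c \<le> v")
      case True
      from IH[OF cr True prems(3)] obtain l1 l2 where
        h: "chain c v l1" "chain v w l2" "nv f r \<le> nv f l1 + nv f l2" by blast
      have cu: "chain u v (u # l1)"
      proof -
        have "l1 \<noteq> []" "last l1 = v" "sorted l1" using h(1) unfolding chain_def by auto
        moreover have "\<forall>x\<in>set l1. u \<le> x" using chain_mem[OF h(1)] uc by force
        ultimately show ?thesis unfolding chain_def by simp
      qed
      have "hd l1 = c" "l1 \<noteq> []" using h(1) unfolding chain_def by auto
      then have "nv f (u # l1) = max (f u - f c) 0 + nv f l1"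
        by (cases l1) auto
      moreover have "nv f (a # r) = max (f u - f c) 0 + nv f r" using rc a by simp
      ultimately have "nv f (a # r) \<le> nv f (u # l1) + nv f l2" using h(3) by linarith
      with cu h(2) show ?thesis by blast
    next
      case False
      have "chain u v [u, v]" using prems by (simp add: chain_two)
      moreover have "chain v w (v # r)"
      proof -
        have "\<forall>x\<in>set r. v \<le> x" using chain_mem[OF cr] False by force
        then show ?thesis using cr unfolding chain_def by (auto simp: rc)
      qed
      moreover have "nv f (a # r) \<le> nv f [u, v] + nv f (v # r)"
      proof -
        have "max (f u - f c) 0 \<le> max (f u - f v) 0 + max (f v - f c) 0"
          unfolding max_def by auto
        then show ?thesis unfolding a rc by simp
      qed
      ultimately show ?thesis by blast
    qed
  qed
qed


definition nvb :: "(real \<Rightarrow> real) \<Rightarrow> real \<Rightarrow> real \<Rightarrow> bool" where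
  "nvb f u v \<longleftrightarrow> (\<exists>B. \<forall>l. chain u v l \<longrightarrow> nv f l \<le> B)"

definition NV :: "(real \<Rightarrow> real) \<Rightarrow> real \<Rightarrow> real \<Rightarrow> real" where
  "NV f u v = Sup (nv f ` {l. chain u v l})"

lemma nv_le_NV: "nvb f u v \<Longrightarrow> chain u v l \<Longrightarrow> nv f l \<le> NV f u v"
  unfolding NV_def nvb_def
  by (rule cSup_upper) (auto simp: bdd_above_def)

lemma NV_le: "u \<le> v \<Longrightarrow> (\<And>l. chain u v l \<Longrightarrow> nv f l \<le> B) \<Longrightarrow> NV f u v \<le> B"
  unfolding NV_def
  by (rule cSup_least) (use chain_two[of u v] in auto)

lemma NV_two: "nvb f u v \<Longrightarrow> u \<le> v \<Longrightarrow> max (f u - f v) 0 \<le> NV f u v"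
  using nv_le_NV[of f u v "[u,v]"] chain_two[of u v] by simp

lemma NV_nonneg: "nvb f u v \<Longrightarrow> u \<le> v \<Longrightarrow> 0 \<le> NV f u v"
  using NV_two[of f u v] by linarith

lemma nvb_same: "nvb f u u"
  unfolding nvb_def using chain_same by (intro exI[of _ 0]) auto

lemma NV_same: "NV f u u = 0"
proof -
  have "NV f u u \<le> 0" by (rule NV_le) (auto simp: chain_same)
  moreover have "0 \<le> NV f u u" by (rule NV_nonneg[OF nvb_same]) simp
  ultimately show ?thesis by simp
qed

lemma nvb_split:
  assumes "nvb f u w" "u \<le> v" "v \<le> w"
  shows "nvb f u v \<and> nvb f v w"
proof -
  obtain B where B: "\<And>l. chain u w l \<Longrightarrow> nv f l \<le> B" using assms(1) unfolding nvb_def by blast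
  have "nv f l \<le> B" if "chain u v l" for l
  proof -
    have "chain u w (l @ tl [v, w]) \<and> nv f (l @ tl [v, w]) = nv f l + nv f [v, w]"
      by (rule chain_concat[OF that chain_two[OF assms(3)]])
    then show ?thesis using B[of "l @ tl [v, w]"] nv_nonneg[of f "[v,w]"] by linarith
  qed
  moreover have "nv f l \<le> B" if "chain v w l" for l
  proof -
    have "chain u w ([u, v] @ tl l) \<and> nv f ([u, v] @ tl l) = nv f [u, v] + nv f l"
      by (rule chain_concat[OF chain_two[OF assms(2)] that])
    then show ?thesis using B[of "[u, v] @ tl l"] nv_nonneg[of f "[u,v]"] by linarith
  qed
  ultimately show ?thesis unfolding nvb_def by blast
qed

lemma nvb_join:
  assumes "nvb f u v" "nvb f v w" "u \<le> v" "v \<le> w"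
  shows "nvb f u w"
proof -
  obtain B1 where B1: "\<And>l. chain u v l \<Longrightarrow> nv f l \<le> B1" using assms(1) unfolding nvb_def by blast
  obtain B2 where B2: "\<And>l. chain v w l \<Longrightarrow> nv f l \<le> B2" using assms(2) unfolding nvb_def by blast
  have "nv f l \<le> B1 + B2" if cl: "chain u w l" for l
  proof -
    obtain l1 l2 where "chain u v l1" "chain v w l2" "nv f l \<le> nv f l1 + nv f l2"
      using chain_split[OF cl assms(3,4)] by blast
    then show ?thesis using B1 B2 by fastforce
  qed
  then show ?thesis unfolding nvb_def by blast
qed

lemma NV_add:
  assumes "nvb f u w" "u \<le> v" "v \<le> w"
  shows "NV f u w = NV f u v + NV f v w"
proof -
  have b: "nvb f u v" "nvb f v w" using nvb_split[OF assms] by auto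
  have "NV f u w \<le> NV f u v + NV f v w"
  proof (rule NV_le)
    show "u \<le> w" using assms by simp
    fix l assume cl: "chain u w l"
    obtain l1 l2 where "chain u v l1" "chain v w l2" "nv f l \<le> nv f l1 + nv f l2"
      using chain_split[OF cl assms(2,3)] by blast
    then show "nv f l \<le> NV f u v + NV f v w" using nv_le_NV[OF b(1)] nv_le_NV[OF b(2)] by fastforce
  qed
  moreover have "NV f u v \<le> NV f u w - NV f v w"
  proof (rule NV_le)
    show "u \<le> v" using assms by simp
    fix l1 assume l1: "chain u v l1"
    have "NV f v w \<le> NV f u w - nv f l1"
    proof (rule NV_le)
      show "v \<le> w" using assms by simp
      fix l2 assume l2: "chain v w l2"
      have "chain u w (l1 @ tl l2) \<and> nv f (l1 @ tl l2) = nv f l1 + nv f l2"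
        by (rule chain_concat[OF l1 l2])
      then show "nv f l2 \<le> NV f u w - nv f l1" using nv_le_NV[OF assms(1), of "l1 @ tl l2"] by linarith
    qed
    then show "nv f l1 \<le> NV f u w - NV f v w" by linarith
  qed
  ultimately show ?thesis by linarith
qed

lemma nv_noninc:
  assumes mono: "\<And>c c'. q \<le> c \<Longrightarrow> c \<le> c' \<Longrightarrow> c' < p \<Longrightarrow> f c' \<le> f c"
    and lb: "\<And>c. q \<le> c \<Longrightarrow> c < p \<Longrightarrow> B \<le> f c" and lbp: "B \<le> f p"
  shows "sorted l \<Longrightarrow> set l \<subseteq> {q..p} \<Longrightarrow> l \<noteq> [] \<Longrightarrow> nv f l \<le> f (hd l) - B"
proof (induction l)
  case Nil then show ?case by simp
next
  case (Cons a r)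
  have aB: "B \<le> f a" using Cons.prems lb lbp by (cases "a < p") auto
  show ?case
  proof (cases r)
    case Nil then show ?thesis using aB by simp
  next
    case (Cons c r')
    have ih: "nv f r \<le> f c - B" using Cons.IH Cons.prems Cons by auto
    have ac: "a \<le> c" "q \<le> a" "c \<le> p" using Cons.prems Cons by auto
    show ?thesis
    proof (cases "c < p")
      case True
      then have "f c \<le> f a" using mono ac by blast
      then show ?thesis using ih Cons by simp
    next
      case False
      then have "c = p" using ac by simp
      have "\<forall>x\<in>set r. x = p" using Cons.prems Cons \<open>c = p\<close> by fastforce
      then have "nv f r = 0" by (rule nv_const)
      then show ?thesis using Cons aB lbp \<open>c = p\<close> by simp
    qed
  qed
qed

lemma nv_nondec:
  assumes mono: "\<And>c c'. q \<le> c \<Longrightarrow> c \<le> c' \<Longrightarrow> c' < p \<Longrightarrow> f c \<le> f c'"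
    and ub: "\<And>c. q \<le> c \<Longrightarrow> c < p \<Longrightarrow> f c \<le> B" and ubp: "f p \<le> B"
  shows "sorted l \<Longrightarrow> set l \<subseteq> {q..p} \<Longrightarrow> nv f l \<le> B - f p"
proof (induction l)
  case Nil then show ?case using ubp by simp
next
  case (Cons a r)
  show ?case
  proof (cases r)
    case Nil then show ?thesis using ubp by simp
  next
    case (Cons c r')
    have ih: "nv f r \<le> B - f p" using Cons.IH Cons.prems Cons by auto
    have ac: "a \<le> c" "q \<le> a" "c \<le> p" using Cons.prems Cons by auto
    show ?thesis
    proof (cases "c < p")
      case True
      then have "f a \<le> f c" using mono ac by blast
      then show ?thesis using ih Cons by simp
    next
      case False
      then have "c = p" using ac by simp
      have "\<forall>x\<in>set r. x = p" using Cons.prems Cons \<open>c = p\<close> by fastforce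
      then have "nv f r = 0" by (rule nv_const)
      moreover have "f a \<le> B"
      proof (cases "a < p")
        case True then show ?thesis using ub ac by blast
      next
        case False then have "a = p" using ac by linarith
        then show ?thesis using ubp by simp
      qed
      ultimately show ?thesis using Cons ubp \<open>c = p\<close> by simp
    qed
  qed
qed

lemma chain_set: "chain u v l \<Longrightarrow> set l \<subseteq> {u..v}"
  using chain_mem by fastforce

lemma NV_noninc:
  assumes "q \<le> p" and mono: "\<And>c c'. q \<le> c \<Longrightarrow> c \<le> c' \<Longrightarrow> c' < p \<Longrightarrow> f c' \<le> f c"
    and lb: "\<And>c. q \<le> c \<Longrightarrow> c < p \<Longrightarrow> B \<le> f c" and lbp: "B \<le> f p"
  shows "nvb f q p \<and> NV f q p \<le> f q - B"
proof -
  have *: "nv f l \<le> f q - B" if "chain q p l" for l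
  proof -
    have "nv f l \<le> f (hd l) - B"
      apply (rule nv_noninc[of q p f B l])
      using mono lb lbp that chain_set[OF that] unfolding chain_def by auto
    then show ?thesis using that unfolding chain_def by simp
  qed
  then have "nvb f q p" unfolding nvb_def by blast
  moreover have "NV f q p \<le> f q - B" using NV_le[OF assms(1) *] by blast
  ultimately show ?thesis by blast
qed

lemma NV_nondec:
  assumes "q \<le> p" and mono: "\<And>c c'. q \<le> c \<Longrightarrow> c \<le> c' \<Longrightarrow> c' < p \<Longrightarrow> f c \<le> f c'"
    and ub: "\<And>c. q \<le> c \<Longrightarrow> c < p \<Longrightarrow> f c \<le> B" and ubp: "f p \<le> B"
  shows "nvb f q p \<and> NV f q p \<le> B - f p"
proof -
  have *: "nv f l \<le> B - f p" if "chain q p l" for l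
    apply (rule nv_nondec[of q p f B l])
    using mono ub ubp that chain_set[OF that] unfolding chain_def by auto
  then have "nvb f q p" unfolding nvb_def by blast
  moreover have "NV f q p \<le> B - f p" using NV_le[OF assms(1) *] by blast
  ultimately show ?thesis by blast
qed


lemma right_cont_D:
  fixes f :: "real \<Rightarrow> real"
  assumes "continuous (at_right p) f" "e > 0"
  shows "\<exists>b>p. \<forall>y. p < y \<and> y < b \<longrightarrow> \<bar>f y - f p\<bar> < e"
proof -
  have "(f \<longlongrightarrow> f p) (at_right p)" using assms(1) by (simp add: continuous_within)
  then have "eventually (\<lambda>y. dist (f y) (f p) < e) (at_right p)" using assms(2) by (rule tendstoD)
  then show ?thesis unfolding eventually_at_right_field dist_real_def by blast
qed

lemma right_cont_I:
  fixes f :: "real \<Rightarrow> real"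
  assumes "\<And>e. e > 0 \<Longrightarrow> \<exists>b>p. \<forall>y. p < y \<and> y < b \<longrightarrow> \<bar>f y - f p\<bar> < e"
  shows "continuous (at_right p) f"
proof -
  have "(f \<longlongrightarrow> f p) (at_right p)"
  proof (rule tendstoI)
    fix e :: real assume "e > 0"
    then obtain b where "b > p" "\<forall>y. p < y \<and> y < b \<longrightarrow> \<bar>f y - f p\<bar> < e" using assms by blast
    then show "eventually (\<lambda>y. dist (f y) (f p) < e) (at_right p)"
      unfolding eventually_at_right_field dist_real_def by blast
  qed
  then show ?thesis by (simp add: continuous_within)
qed

lemma left_lim_D:
  fixes f :: "real \<Rightarrow> real"
  assumes "(f \<longlongrightarrow> L) (at_left p)" "e > 0"
  shows "\<exists>b<p. \<forall>y. b < y \<and> y < p \<longrightarrow> \<bar>f y - L\<bar> < e"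
proof -
  have "eventually (\<lambda>y. dist (f y) L < e) (at_left p)" using assms by (rule tendstoD)
  then show ?thesis unfolding eventually_at_left_field dist_real_def by blast
qed

lemma left_lim_I:
  fixes f :: "real \<Rightarrow> real"
  assumes "\<And>e. e > 0 \<Longrightarrow> \<exists>b<p. \<forall>y. b < y \<and> y < p \<longrightarrow> \<bar>f y - L\<bar> < e"
  shows "(f \<longlongrightarrow> L) (at_left p)"
proof (rule tendstoI)
  fix e :: real assume "e > 0"
  then obtain b where "b < p" "\<forall>y. b < y \<and> y < p \<longrightarrow> \<bar>f y - L\<bar> < e" using assms by blast
  then show "eventually (\<lambda>y. dist (f y) L < e) (at_left p)"
    unfolding eventually_at_left_field dist_real_def by blast
qed

lemma left_lim_cauchy:
  fixes f :: "real \<Rightarrow> real"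
  assumes "\<And>e. e > 0 \<Longrightarrow> \<exists>b<p. \<forall>y z. b < y \<and> y < p \<and> b < z \<and> z < p \<longrightarrow> \<bar>f y - f z\<bar> < e"
  shows "\<exists>L. (f \<longlongrightarrow> L) (at_left p)"
proof -
  define X where "X n = f (p - 1 / real (Suc n))" for n
  have "Cauchy X"
  proof (rule metric_CauchyI)
    fix e :: real assume "e > 0"
    then obtain b where b: "b < p" "\<forall>y z. b < y \<and> y < p \<and> b < z \<and> z < p \<longrightarrow> \<bar>f y - f z\<bar> < e"
      using assms by blast
    obtain N where N: "1 / real (Suc N) < p - b"
      using reals_Archimedean[of "p - b"] b(1) by (auto simp: inverse_eq_divide)
    have "b < p - 1 / real (Suc n)" if "n \<ge> N" for n
    proof -
      have "1 / real (Suc n) \<le> 1 / real (Suc N)" using that by (simp add: frac_le)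
      then show ?thesis using N by linarith
    qed
    moreover have "p - 1 / real (Suc n) < p" for n by simp
    ultimately show "\<exists>M. \<forall>m\<ge>M. \<forall>n\<ge>M. dist (X m) (X n) < e"
      using b(2) unfolding X_def dist_real_def by blast
  qed
  then obtain L where L: "X \<longlonglongrightarrow> L" using Cauchy_convergent_iff convergent_def by blast
  have "(f \<longlongrightarrow> L) (at_left p)"
  proof (rule left_lim_I)
    fix e :: real assume "e > 0"
    then have "e / 2 > 0" by simp
    then obtain b where b: "b < p" "\<forall>y z. b < y \<and> y < p \<and> b < z \<and> z < p \<longrightarrow> \<bar>f y - f z\<bar> < e / 2"
      using assms by blast
    obtain N where N: "1 / real (Suc N) < p - b"
      using reals_Archimedean[of "p - b"] b(1) by (auto simp: inverse_eq_divide)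
    obtain M where M: "\<forall>n\<ge>M. \<bar>X n - L\<bar> < e / 2"
      using LIMSEQ_D[OF L \<open>e/2 > 0\<close>] by (auto simp: dist_real_def)
    define n where "n = max N M"
    have "1 / real (Suc n) \<le> 1 / real (Suc N)" unfolding n_def by (simp add: frac_le)
    then have bn: "b < p - 1 / real (Suc n)" using N by linarith
    have "\<bar>X n - L\<bar> < e / 2" using M n_def by simp
    have "\<bar>f y - L\<bar> < e" if y: "b < y" "y < p" for y
    proof -
      have "p - 1 / real (Suc n) < p" by simp
      then have "\<bar>f y - f (p - 1 / real (Suc n))\<bar> < e / 2" using b(2) y bn by blast
      then show ?thesis using \<open>\<bar>X n - L\<bar> < e / 2\<close> unfolding X_def by linarith
    qed
    then show "\<exists>b<p. \<forall>y. b < y \<and> y < p \<longrightarrow> \<bar>f y - L\<bar> < e"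
      using b(1) by blast
  qed
  then show ?thesis by blast
qed

lemma mono_left_lim:
  fixes F :: "real \<Rightarrow> real"
  assumes "0 < p" and mono: "\<And>x y. 0 \<le> x \<Longrightarrow> x \<le> y \<Longrightarrow> y < p \<Longrightarrow> F x \<le> F y"
    and bd: "\<And>x. 0 \<le> x \<Longrightarrow> x < p \<Longrightarrow> F x \<le> M"
  shows "\<exists>L. (F \<longlongrightarrow> L) (at_left p)"
proof -
  define L where "L = (SUP x\<in>{0..<p}. F x)"
  have bdd: "bdd_above (F ` {0..<p})" unfolding bdd_above_def using bd by (intro exI[of _ M]) auto
  have ne: "{0..<p} \<noteq> {}" using assms(1) by simp
  have "(F \<longlongrightarrow> L) (at_left p)"
  proof (rule left_lim_I)
    fix e :: real assume "e > 0"
    then have "L - e < L" by simp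
    then obtain x0 where x0: "x0 \<in> {0..<p}" "L - e < F x0"
      unfolding L_def using less_cSUP_iff[OF ne bdd] by blast
    have "\<bar>F y - L\<bar> < e" if "x0 < y" "y < p" for y
    proof -
      have "F y \<le> L" unfolding L_def using that x0 by (intro cSUP_upper[OF _ bdd]) auto
      moreover have "F x0 \<le> F y" using mono[of x0 y] that x0 by auto
      ultimately show ?thesis using x0 by linarith
    qed
    then show "\<exists>b<p. \<forall>y. b < y \<and> y < p \<longrightarrow> \<bar>F y - L\<bar> < e" using x0 by auto
  qed
  then show ?thesis by blast
qed

lemma cont_induct:
  fixes P :: "real \<Rightarrow> bool"
  assumes left: "\<And>p. 0 \<le> p \<Longrightarrow> (\<And>t. 0 \<le> t \<Longrightarrow> t < p \<Longrightarrow> P t) \<Longrightarrow> P p"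
    and right: "\<And>p. 0 \<le> p \<Longrightarrow> P p \<Longrightarrow> \<exists>d>0. \<forall>t. p \<le> t \<and> t \<le> p + d \<longrightarrow> P t"
    and "0 \<le> t"
  shows "P t"
proof (rule ccontr)
  assume "\<not> P t"
  define S where "S = {t. 0 \<le> t \<and> \<not> P t}"
  have ne: "S \<noteq> {}" using \<open>\<not> P t\<close> \<open>0 \<le> t\<close> S_def by blast
  have bdd: "bdd_below S" unfolding S_def bdd_below_def by auto
  define p where "p = Inf S"
  have p0: "0 \<le> p" unfolding p_def by (rule cInf_greatest[OF ne]) (auto simp: S_def)
  have below: "P u" if "0 \<le> u" "u < p" for u
  proof (rule ccontr)
    assume "\<not> P u"
    then have "u \<in> S" using that S_def by blast
    then have "p \<le> u" unfolding p_def using cInf_lower[OF _ bdd] by blast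
    then show False using that by simp
  qed
  have Pp: "P p" by (rule left[OF p0 below])
  obtain d where d: "d > 0" "\<forall>u. p \<le> u \<and> u \<le> p + d \<longrightarrow> P u" using right[OF p0 Pp] by blast
  have "p + d \<le> p" unfolding p_def
  proof (rule cInf_greatest[OF ne])
    fix u assume u: "u \<in> S"
    then have "p \<le> u" unfolding p_def using cInf_lower[OF _ bdd] by blast
    show "Inf S + d \<le> u"
    proof (rule ccontr)
      assume "\<not> Inf S + d \<le> u"
      then have "P u" using d(2) \<open>p \<le> u\<close> p_def by auto
      then show False using u S_def by blast
    qed
  qed
  then show False using d(1) by simp
qed

lemma cadlag_bounded:
  assumes "cadlag f" "0 \<le> T"
  shows "\<exists>K. \<forall>t. 0 \<le> t \<and> t \<le> T \<longrightarrow> \<bar>f t\<bar> \<le> K"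
proof -
  have rc: "\<And>t. 0 \<le> t \<Longrightarrow> continuous (at_right t) f" and ll: "\<And>t. 0 < t \<Longrightarrow> \<exists>l. (f \<longlongrightarrow> l) (at_left t)"
    using assms(1) unfolding cadlag_def by auto
  let ?P = "\<lambda>T. \<exists>K. \<forall>t. 0 \<le> t \<and> t \<le> T \<longrightarrow> \<bar>f t\<bar> \<le> K"
  show ?thesis
  proof (rule cont_induct[of ?P])
    fix p :: real assume p0: "0 \<le> p" and IH: "\<And>t. 0 \<le> t \<Longrightarrow> t < p \<Longrightarrow> ?P t"
    show "?P p"
    proof (cases "p = 0")
      case True then show ?thesis by (intro exI[of _ "\<bar>f 0\<bar>"]) auto
    next
      case False
      then have "0 < p" using p0 by simp
      then obtain L where L: "(f \<longlongrightarrow> L) (at_left p)" using ll by blast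
      obtain b where b: "b < p" "\<forall>y. b < y \<and> y < p \<longrightarrow> \<bar>f y - L\<bar> < 1"
        using left_lim_D[OF L, of 1] by auto
      define c where "c = max 0 ((b + p) / 2)"
      have c: "0 \<le> c" "c < p" using b(1) \<open>0 < p\<close> unfolding c_def by auto
      obtain K where K: "\<forall>t. 0 \<le> t \<and> t \<le> c \<longrightarrow> \<bar>f t\<bar> \<le> K" using IH[OF c] by blast
      have "\<bar>f t\<bar> \<le> max K (max (\<bar>L\<bar> + 1) \<bar>f p\<bar>)" if t0: "0 \<le> t" "t \<le> p" for t
      proof -
        consider "t \<le> c" | "c < t" "t < p" | "t = p" using t0 by force
        then show ?thesis
        proof cases
          case 1 then show ?thesis using K t0 by fastforce
        next
          case 2
          have "(b + p) / 2 \<le> c" unfolding c_def by simp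
          then have "b < t" using b(1) 2 by (simp add: field_simps)
          then have "\<bar>f t - L\<bar> < 1" using b(2) 2 by blast
          then show ?thesis by linarith
        next
          case 3 then show ?thesis by simp
        qed
      qed
      then show ?thesis by blast
    qed
  next
    fix p :: real assume p0: "0 \<le> p" and Pp: "?P p"
    then obtain K where K: "\<forall>t. 0 \<le> t \<and> t \<le> p \<longrightarrow> \<bar>f t\<bar> \<le> K" by blast
    obtain b where b: "b > p" "\<forall>y. p < y \<and> y < b \<longrightarrow> \<bar>f y - f p\<bar> < 1"
      using right_cont_D[OF rc[OF p0], of 1] by auto
    have Pt: "?P t" if "p \<le> t" "t \<le> p + (b - p) / 2" for t
    proof -
      have "\<bar>f u\<bar> \<le> max K (\<bar>f p\<bar> + 1)" if "0 \<le> u" "u \<le> t" for u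
      proof (cases "u \<le> p")
        case True then show ?thesis using K that by fastforce
      next
        case False
        have "u < b" using that \<open>t \<le> p + (b - p) / 2\<close> b(1) by (simp add: field_simps)
        then have "\<bar>f u - f p\<bar> < 1" using b(2) False by auto
        then show ?thesis by linarith
      qed
      then show ?thesis by blast
    qed
    have d0: "(b - p) / 2 > 0" using b(1) by simp
    show "\<exists>d>0. \<forall>t. p \<le> t \<and> t \<le> p + d \<longrightarrow> ?P t"
      using d0 Pt by blast
  qed (rule assms(2))
qed

lemma cadlag_add: "cadlag f \<Longrightarrow> cadlag g \<Longrightarrow> cadlag (\<lambda>t. f t + g t)"
  unfolding cadlag_def
proof (intro conjI allI impI)
  fix t :: real
  assume a: "(\<forall>t\<ge>0. continuous (at_right t) f) \<and> (\<forall>t>0. \<exists>l. (f \<longlongrightarrow> l) (at_left t))"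
    "(\<forall>t\<ge>0. continuous (at_right t) g) \<and> (\<forall>t>0. \<exists>l. (g \<longlongrightarrow> l) (at_left t))"
  { assume "0 \<le> t" then show "continuous (at_right t) (\<lambda>t. f t + g t)"
      using a by (intro continuous_add) auto }
  { assume "0 < t"
    then obtain l1 l2 where "(f \<longlongrightarrow> l1) (at_left t)" "(g \<longlongrightarrow> l2) (at_left t)" using a by blast
    then show "\<exists>l. ((\<lambda>t. f t + g t) \<longlongrightarrow> l) (at_left t)" by (intro exI[of _ "l1 + l2"] tendsto_add) }
qed

lemma cadlag_diff: "cadlag f \<Longrightarrow> cadlag g \<Longrightarrow> cadlag (\<lambda>t. f t - g t)"
  unfolding cadlag_def
proof (intro conjI allI impI)
  fix t :: real
  assume a: "(\<forall>t\<ge>0. continuous (at_right t) f) \<and> (\<forall>t>0. \<exists>l. (f \<longlongrightarrow> l) (at_left t))"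
    "(\<forall>t\<ge>0. continuous (at_right t) g) \<and> (\<forall>t>0. \<exists>l. (g \<longlongrightarrow> l) (at_left t))"
  { assume "0 \<le> t" then show "continuous (at_right t) (\<lambda>t. f t - g t)"
      using a by (intro continuous_diff) auto }
  { assume "0 < t"
    then obtain l1 l2 where "(f \<longlongrightarrow> l1) (at_left t)" "(g \<longlongrightarrow> l2) (at_left t)" using a by blast
    then show "\<exists>l. ((\<lambda>t. f t - g t) \<longlongrightarrow> l) (at_left t)" by (intro exI[of _ "l1 - l2"] tendsto_diff) }
qed

lemma lim_ge_noninc:
  fixes f :: "real \<Rightarrow> real"
  assumes "(f \<longlongrightarrow> L) (at_left p)" "c < p" "\<And>y. c \<le> y \<Longrightarrow> y < p \<Longrightarrow> f y \<le> f c"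
  shows "L \<le> f c"
proof (rule tendsto_upperbound[OF assms(1)])
  show "eventually (\<lambda>y. f y \<le> f c) (at_left p)"
    unfolding eventually_at_left_field using assms(2,3) by (intro exI[of _ c]) auto
qed simp

lemma lim_le_nondec:
  fixes f :: "real \<Rightarrow> real"
  assumes "(f \<longlongrightarrow> L) (at_left p)" "c < p" "\<And>y. c \<le> y \<Longrightarrow> y < p \<Longrightarrow> f c \<le> f y"
  shows "f c \<le> L"
proof (rule tendsto_lowerbound[OF assms(1)])
  show "eventually (\<lambda>y. f c \<le> f y) (at_left p)"
    unfolding eventually_at_left_field using assms(2,3) by (intro exI[of _ c]) auto
qed simp


lemma ext0_mono:
  assumes "nondecr G" "0 \<le> G 0" "u \<le> v"
  shows "ext0 G u \<le> ext0 G v"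
proof -
  have m: "mono_on {0..} G" using assms(1) unfolding nondecr_def by simp
  show ?thesis
  proof (cases "u < 0")
    case True
    then show ?thesis
    proof (cases "v < 0")
      case False
      then have "G 0 \<le> G v" using m by (auto intro: mono_onD)
      then show ?thesis using True False assms(2) by (simp add: ext0_def)
    qed (simp add: ext0_def)
  next
    case False
    then show ?thesis using assms(3) m by (auto simp: ext0_def intro: mono_onD)
  qed
qed

lemma ext0_rc:
  assumes "nondecr G"
  shows "continuous (at_right u) (ext0 G)"
proof (rule right_cont_I)
  fix e :: real assume e: "e > 0"
  show "\<exists>b>u. \<forall>y. u < y \<and> y < b \<longrightarrow> \<bar>ext0 G y - ext0 G u\<bar> < e"
  proof (cases "u < 0")
    case True
    then show ?thesis using e by (intro exI[of _ 0]) (auto simp: ext0_def)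
  next
    case False
    then have "continuous (at_right u) G" using assms unfolding nondecr_def cadlag_def by simp
    from right_cont_D[OF this e] obtain b where "b > u" "\<forall>y. u < y \<and> y < b \<longrightarrow> \<bar>G y - G u\<bar> < e" by blast
    then show ?thesis using False by (intro exI[of _ b]) (auto simp: ext0_def)
  qed
qed

lemma ext0_Ioc:
  assumes "nondecr G" "0 \<le> G 0" "u \<le> v"
  shows "emeasure (interval_measure (ext0 G)) {u<..v} = ennreal (ext0 G v - ext0 G u)"
  by (rule emeasure_interval_measure_Ioc[OF assms(3)]) (auto intro: ext0_mono[OF assms(1,2)] ext0_rc[OF assms(1)])

lemma IM:
  assumes G: "nondecr G" "0 \<le> G 0" and "0 \<le> p" "0 < d"
    and const: "\<And>r. p \<le> r \<Longrightarrow> r \<le> p + d \<Longrightarrow> G r = G p"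
    and left: "\<And>e. e > 0 \<Longrightarrow> \<exists>q<p. ext0 G p - ext0 G q < e"
  shows "emeasure (interval_measure (ext0 G)) {p..<p+d} = 0"
proof -
  have "emeasure (interval_measure (ext0 G)) {p..<p+d} \<le> 0"
  proof (rule ennreal_le_epsilon)
    fix e :: real assume "e > 0"
    then obtain q where q: "q < p" "ext0 G p - ext0 G q < e" using left by blast
    have "emeasure (interval_measure (ext0 G)) {p..<p+d} \<le> emeasure (interval_measure (ext0 G)) {q<..p+d}"
      using q(1) by (intro emeasure_mono) auto
    also have "\<dots> = ennreal (ext0 G (p + d) - ext0 G q)"
      using q(1) assms(4) by (intro ext0_Ioc[OF G]) simp
    also have "ext0 G (p + d) = ext0 G p"
      using const[of "p + d"] assms(3,4) by (simp add: ext0_def)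
    also have "ennreal (ext0 G p - ext0 G q) \<le> ennreal e"
      using q(2) by (intro ennreal_leI) simp
    finally show "emeasure (interval_measure (ext0 G)) {p..<p+d} \<le> 0 + ennreal e" by simp
  qed
  then show ?thesis by simp
qed

lemma null_cover:
  fixes M :: "real measure"
  assumes sM: "sets M = sets borel"
    and loc: "\<And>p. p \<in> A \<Longrightarrow> \<exists>d>0. {p..<p+d} \<subseteq> A \<and> emeasure M {p..<p+d} = 0"
  shows "A \<in> sets borel \<and> emeasure M A = 0"
proof -
  obtain d where d: "\<And>p. p \<in> A \<Longrightarrow> d p > 0 \<and> {p..<p + d p} \<subseteq> A \<and> emeasure M {p..<p + d p} = 0"
    using loc by metis
  define I where "I p = {p<..<p + d p}" for p
  have opI: "\<And>S. S \<in> I ` A \<Longrightarrow> open S" unfolding I_def by auto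
  obtain F' where F': "F' \<subseteq> I ` A" "countable F'" "\<Union>F' = \<Union>(I ` A)"
    using Lindelof[OF opI] by blast
  obtain C' where C': "countable C'" "C' \<subseteq> A" "F' = I ` C'"
    using countable_subset_image[of F' I A] F'(1,2) by blast
  define E where "E = A - \<Union>(I ` A)"
  have sep: "e1 + d e1 \<le> e2" if "e1 \<in> E" "e2 \<in> E" "e1 < e2" for e1 e2
  proof (rule ccontr)
    assume "\<not> e1 + d e1 \<le> e2"
    then have "e2 \<in> I e1" using that unfolding I_def by auto
    moreover have "e1 \<in> A" using that E_def by auto
    ultimately show False using that(2) E_def by auto
  qed
  have dis: "I e1 \<inter> I e2 = {}" if "e1 \<in> E" "e2 \<in> E" "e1 < e2" for e1 e2
    using sep[OF that] unfolding I_def by auto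
  have ne: "I e \<noteq> {}" if "e \<in> E" for e
  proof -
    have "d e > 0" using d that E_def by auto
    then obtain z where "e < z" "z < e + d e" using dense[of e "e + d e"] by auto
    then show ?thesis unfolding I_def by auto
  qed
  have inj: "inj_on I E"
  proof (rule inj_onI)
    fix e1 e2 assume e: "e1 \<in> E" "e2 \<in> E" "I e1 = I e2"
    show "e1 = e2"
    proof (rule ccontr)
      assume "e1 \<noteq> e2"
      then consider "e1 < e2" | "e2 < e1" by linarith
      then show False
      proof cases
        case 1 then show False using dis[OF e(1,2) 1] e(3) ne[OF e(1)] by simp
      next
        case 2 then show False using dis[OF e(2,1) 2] e(3) ne[OF e(1)] by simp
      qed
    qed
  qed
  have pw: "pairwise disjnt (I ` E)"
  proof (rule pairwiseI)
    fix X Y assume "X \<in> I ` E" "Y \<in> I ` E" "X \<noteq> Y"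
    then obtain e1 e2 where e: "e1 \<in> E" "e2 \<in> E" "X = I e1" "Y = I e2" by blast
    then have "e1 \<noteq> e2" using \<open>X \<noteq> Y\<close> by blast
    then consider "e1 < e2" | "e2 < e1" by linarith
    then show "disjnt X Y"
    proof cases
      case 1 then show ?thesis using dis[OF e(1,2) 1] e unfolding disjnt_def by simp
    next
      case 2 then show ?thesis using dis[OF e(2,1) 2] e unfolding disjnt_def by blast
    qed
  qed
  have "countable (I ` E)" by (rule countable_disjoint_open_subsets[OF _ pw]) (auto simp: I_def)
  then have cE: "countable E" using inj by (rule countable_image_inj_on)
  define C where "C = C' \<union> E"
  have cC: "countable C" using C'(1) cE C_def by simp
  have CA: "C \<subseteq> A" using C'(2) E_def C_def by auto
  have Aeq: "A = (\<Union>p\<in>C. {p..<p + d p})"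
  proof
    show "(\<Union>p\<in>C. {p..<p + d p}) \<subseteq> A" using CA d by blast
  next
    show "A \<subseteq> (\<Union>p\<in>C. {p..<p + d p})"
    proof
      fix z assume z: "z \<in> A"
      show "z \<in> (\<Union>p\<in>C. {p..<p + d p})"
      proof (cases "z \<in> \<Union>(I ` A)")
        case True
        then have "z \<in> \<Union>(I ` C')" using F'(3) C'(3) by simp
        then obtain p where "p \<in> C'" "z \<in> I p" by blast
        then show ?thesis unfolding C_def I_def by auto
      next
        case False
        then have "z \<in> E" using z E_def by simp
        moreover have "d z > 0" using d z by blast
        ultimately show ?thesis unfolding C_def by auto
      qed
    qed
  qed
  have "(\<Union>p\<in>C. {p..<p + d p}) \<in> null_sets M"
  proof (rule null_sets_UN'[OF cC])
    fix p assume "p \<in> C"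
    then have "p \<in> A" using CA by blast
    then show "{p..<p + d p} \<in> null_sets M" using d[of p] sM by (simp add: null_sets_def)
  qed
  then have "A \<in> null_sets M" using Aeq by simp
  then show ?thesis using sM by (simp add: null_sets_def)
qed

lemma bv_from_decomp:
  assumes "cadlag \<eta>" "nondecr el" "nondecr eu" "\<And>t. 0 \<le> t \<Longrightarrow> \<eta> t = el t - eu t"
  shows "bv \<eta>"
  unfolding bv_def
proof (intro conjI allI impI)
  show "cadlag \<eta>" by (rule assms(1))
  fix T :: real assume "0 \<le> T"
  have ml: "mono_on {0..} el" and mu: "mono_on {0..} eu" using assms(2,3) unfolding nondecr_def by auto
  show "\<exists>B. \<forall>n s. s 0 = 0 \<and> s n = T \<and> (\<forall>i<n. s i \<le> s (Suc i)) \<longrightarrow>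
          (\<Sum>i<n. \<bar>\<eta> (s (Suc i)) - \<eta> (s i)\<bar>) \<le> B"
  proof (intro exI allI impI)
    fix n and s :: "nat \<Rightarrow> real"
    assume h: "s 0 = 0 \<and> s n = T \<and> (\<forall>i<n. s i \<le> s (Suc i))"
    have nn: "0 \<le> s i" if "i \<le> n" for i
      using that
    proof (induction i)
      case 0 then show ?case using h by simp
    next
      case (Suc i)
      then have "s i \<le> s (Suc i)" using h by simp
      then show ?case using Suc by simp
    qed
    have "\<bar>\<eta> (s (Suc i)) - \<eta> (s i)\<bar> \<le> (el (s (Suc i)) - el (s i)) + (eu (s (Suc i)) - eu (s i))"
      if "i < n" for i
    proof -
      have a: "0 \<le> s i" "0 \<le> s (Suc i)" "s i \<le> s (Suc i)" using nn[of i] nn[of "Suc i"] h that by auto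
      have "el (s i) \<le> el (s (Suc i))" "eu (s i) \<le> eu (s (Suc i))"
        using a ml mu by (auto intro: mono_onD)
      then show ?thesis using assms(4)[OF a(1)] assms(4)[OF a(2)] by linarith
    qed
    then have "(\<Sum>i<n. \<bar>\<eta> (s (Suc i)) - \<eta> (s i)\<bar>) \<le>
        (\<Sum>i<n. (el (s (Suc i)) - el (s i)) + (eu (s (Suc i)) - eu (s i)))"
      by (intro sum_mono) auto
    also have "\<dots> = (el (s n) - el (s 0)) + (eu (s n) - eu (s 0))"
      using sum_lessThan_telescope[of "\<lambda>i. el (s i)" n] sum_lessThan_telescope[of "\<lambda>i. eu (s i)" n]
      by (simp add: sum.distrib)
    finally show "(\<Sum>i<n. \<bar>\<eta> (s (Suc i)) - \<eta> (s i)\<bar>) \<le> (el T - el 0) + (eu T - eu 0)"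
      using h by simp
  qed
qed


locale dset =
  fixes a :: real and x \<eta> :: "real \<Rightarrow> real"
  assumes a_pos: "0 < a"
    and cx: "cadlag x" and ce: "cadlag \<eta>"
    and xb: "\<And>t. 0 \<le> t \<Longrightarrow> 0 \<le> x t \<and> x t \<le> a"
    and Ia: "\<And>e s t. 0 < e \<Longrightarrow> 0 \<le> s \<Longrightarrow> s \<le> t \<Longrightarrow> (\<And>r. s < r \<Longrightarrow> r \<le> t \<Longrightarrow> e \<le> x r) \<Longrightarrow> \<eta> t \<le> \<eta> s"
    and Ib: "\<And>e s t. 0 < e \<Longrightarrow> 0 \<le> s \<Longrightarrow> s \<le> t \<Longrightarrow> (\<And>r. s < r \<Longrightarrow> r \<le> t \<Longrightarrow> x r \<le> a - e) \<Longrightarrow> \<eta> s \<le> \<eta> t"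
    and Ja: "\<And>t L. 0 < t \<Longrightarrow> 0 < x t \<Longrightarrow> (\<eta> \<longlongrightarrow> L) (at_left t) \<Longrightarrow> \<eta> t \<le> L"
    and Jb: "\<And>t L. 0 < t \<Longrightarrow> x t < a \<Longrightarrow> (\<eta> \<longlongrightarrow> L) (at_left t) \<Longrightarrow> L \<le> \<eta> t"
    and Za: "0 < x 0 \<Longrightarrow> \<eta> 0 \<le> 0"
    and Zb: "x 0 < a \<Longrightarrow> 0 \<le> \<eta> 0"
begin

lemma right_noninc:
  assumes "0 \<le> p" "0 < x p"
  shows "\<exists>d>0. (\<forall>c c'. p \<le> c \<longrightarrow> c \<le> c' \<longrightarrow> c' \<le> p + d \<longrightarrow> \<eta> c' \<le> \<eta> c) \<and> (\<forall>r. p \<le> r \<longrightarrow> r \<le> p + d \<longrightarrow> 0 < x r)"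
proof -
  define e where "e = x p / 2"
  have e: "0 < e" "x p = 2 * e" using assms(2) by (simp_all add: e_def)
  have "continuous (at_right p) x" using cx assms(1) unfolding cadlag_def by simp
  from right_cont_D[OF this e(1)] obtain b where b: "b > p" "\<forall>y. p < y \<and> y < b \<longrightarrow> \<bar>x y - x p\<bar> < e" by blast
  obtain d where d: "0 < d" "p + d < b" using dense[of 0 "b - p"] b(1) by (auto simp: algebra_simps)
  have xr: "e \<le> x r" if "p \<le> r" "r \<le> p + d" for r
  proof (cases "r = p")
    case True then show ?thesis using e by simp
  next
    case False
    then have "\<bar>x r - x p\<bar> < e" using b(2) that d by auto
    then show ?thesis using e by linarith
  qed
  have "\<eta> c' \<le> \<eta> c" if "p \<le> c" "c \<le> c'" "c' \<le> p + d" for c c'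
    by (rule Ia[OF e(1)]) (use that xr assms(1) in auto)
  then show ?thesis using d(1) xr e(1) by (intro exI[of _ d]) force
qed

lemma right_nondec:
  assumes "0 \<le> p" "x p < a"
  shows "\<exists>d>0. (\<forall>c c'. p \<le> c \<longrightarrow> c \<le> c' \<longrightarrow> c' \<le> p + d \<longrightarrow> \<eta> c \<le> \<eta> c') \<and> (\<forall>r. p \<le> r \<longrightarrow> r \<le> p + d \<longrightarrow> x r < a)"
proof -
  define e where "e = (a - x p) / 2"
  have e: "0 < e" "a - x p = 2 * e" using assms(2) by (simp_all add: e_def)
  have "continuous (at_right p) x" using cx assms(1) unfolding cadlag_def by simp
  from right_cont_D[OF this e(1)] obtain b where b: "b > p" "\<forall>y. p < y \<and> y < b \<longrightarrow> \<bar>x y - x p\<bar> < e" by blast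
  obtain d where d: "0 < d" "p + d < b" using dense[of 0 "b - p"] b(1) by (auto simp: algebra_simps)
  have xr: "x r \<le> a - e" if "p \<le> r" "r \<le> p + d" for r
  proof (cases "r = p")
    case True then show ?thesis using e by simp
  next
    case False
    then have "\<bar>x r - x p\<bar> < e" using b(2) that d by auto
    then show ?thesis using e by linarith
  qed
  have "\<eta> c \<le> \<eta> c'" if "p \<le> c" "c \<le> c'" "c' \<le> p + d" for c c'
    by (rule Ib[OF e(1)]) (use that xr assms(1) in auto)
  moreover have "x r < a" if "p \<le> r" "r \<le> p + d" for r using xr[OF that] e(1) by linarith
  ultimately show ?thesis using d(1) by (intro exI[of _ d]) blast
qed

lemma left_lim_x: "0 < p \<Longrightarrow> \<exists>L. (x \<longlongrightarrow> L) (at_left p)"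
  using cx unfolding cadlag_def by blast

lemma left_lim_eta: "0 < p \<Longrightarrow> \<exists>L. (\<eta> \<longlongrightarrow> L) (at_left p)"
  using ce unfolding cadlag_def by blast

lemma left_noninc:
  assumes "0 < p" "(x \<longlongrightarrow> Lx) (at_left p)" "0 < Lx"
  shows "\<exists>q. 0 \<le> q \<and> q < p \<and> (\<forall>c c'. q \<le> c \<longrightarrow> c \<le> c' \<longrightarrow> c' < p \<longrightarrow> \<eta> c' \<le> \<eta> c)"
proof -
  define e where "e = Lx / 2"
  have e: "0 < e" "Lx = 2 * e" using assms(3) by (simp_all add: e_def)
  obtain b where b: "b < p" "\<forall>y. b < y \<and> y < p \<longrightarrow> \<bar>x y - Lx\<bar> < e" using left_lim_D[OF assms(2) e(1)] by blast
  obtain q' where q': "b < q'" "q' < p" using dense b(1) by blast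
  define q where "q = max 0 q'"
  have q: "0 \<le> q" "q < p" "b < q" using q' assms(1) unfolding q_def by auto
  have "\<eta> c' \<le> \<eta> c" if "q \<le> c" "c \<le> c'" "c' < p" for c c'
  proof (rule Ia[OF e(1)])
    show "0 \<le> c" "c \<le> c'" using that q by auto
    fix r assume "c < r" "r \<le> c'"
    then have "\<bar>x r - Lx\<bar> < e" using b(2) that q by auto
    then show "e \<le> x r" using e by linarith
  qed
  then show ?thesis using q by blast
qed

lemma left_nondec:
  assumes "0 < p" "(x \<longlongrightarrow> Lx) (at_left p)" "Lx < a"
  shows "\<exists>q. 0 \<le> q \<and> q < p \<and> (\<forall>c c'. q \<le> c \<longrightarrow> c \<le> c' \<longrightarrow> c' < p \<longrightarrow> \<eta> c \<le> \<eta> c')"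
proof -
  define e where "e = (a - Lx) / 2"
  have e: "0 < e" "a - Lx = 2 * e" using assms(3) by (simp_all add: e_def)
  obtain b where b: "b < p" "\<forall>y. b < y \<and> y < p \<longrightarrow> \<bar>x y - Lx\<bar> < e" using left_lim_D[OF assms(2) e(1)] by blast
  obtain q' where q': "b < q'" "q' < p" using dense b(1) by blast
  define q where "q = max 0 q'"
  have q: "0 \<le> q" "q < p" "b < q" using q' assms(1) unfolding q_def by auto
  have "\<eta> c \<le> \<eta> c'" if "q \<le> c" "c \<le> c'" "c' < p" for c c'
  proof (rule Ib[OF e(1)])
    show "0 \<le> c" "c \<le> c'" using that q by auto
    fix r assume "c < r" "r \<le> c'"
    then have "\<bar>x r - Lx\<bar> < e" using b(2) that q by auto
    then show "x r \<le> a - e" using e by linarith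
  qed
  then show ?thesis using q by blast
qed

lemma Lx_cases: "0 < Lx \<or> Lx < a"
  using a_pos by linarith

lemma nvb_all: "0 \<le> t \<Longrightarrow> nvb \<eta> 0 t"
proof (rule cont_induct[where P="\<lambda>t. nvb \<eta> 0 t"])
  fix p :: real assume p0: "0 \<le> p" and IH: "\<And>t. 0 \<le> t \<Longrightarrow> t < p \<Longrightarrow> nvb \<eta> 0 t"
  show "nvb \<eta> 0 p"
  proof (cases "p = 0")
    case True then show ?thesis using nvb_same by simp
  next
    case False
    then have p: "0 < p" using p0 by simp
    obtain Lx where Lx: "(x \<longlongrightarrow> Lx) (at_left p)" using left_lim_x[OF p] by blast
    obtain Le where Le: "(\<eta> \<longlongrightarrow> Le) (at_left p)" using left_lim_eta[OF p] by blast
    have "\<exists>q. 0 \<le> q \<and> q < p \<and> nvb \<eta> q p"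
    proof (cases "0 < Lx")
      case True
      obtain q where q: "0 \<le> q" "q < p" "\<forall>c c'. q \<le> c \<longrightarrow> c \<le> c' \<longrightarrow> c' < p \<longrightarrow> \<eta> c' \<le> \<eta> c"
        using left_noninc[OF p Lx True] by blast
      have "nvb \<eta> q p \<and> NV \<eta> q p \<le> \<eta> q - min (\<eta> p) Le"
      proof (rule NV_noninc)
        show "q \<le> p" using q by simp
        show "\<And>c c'. q \<le> c \<Longrightarrow> c \<le> c' \<Longrightarrow> c' < p \<Longrightarrow> \<eta> c' \<le> \<eta> c" using q by blast
        fix c assume "q \<le> c" "c < p"
        then have "Le \<le> \<eta> c" using q by (intro lim_ge_noninc[OF Le]) auto
        then show "min (\<eta> p) Le \<le> \<eta> c" by simp
      qed simp
      then show ?thesis using q by blast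
    next
      case False
      then have "Lx < a" using Lx_cases by blast
      obtain q where q: "0 \<le> q" "q < p" "\<forall>c c'. q \<le> c \<longrightarrow> c \<le> c' \<longrightarrow> c' < p \<longrightarrow> \<eta> c \<le> \<eta> c'"
        using left_nondec[OF p Lx \<open>Lx < a\<close>] by blast
      have "nvb \<eta> q p \<and> NV \<eta> q p \<le> max (\<eta> p) Le - \<eta> p"
      proof (rule NV_nondec)
        show "q \<le> p" using q by simp
        show "\<And>c c'. q \<le> c \<Longrightarrow> c \<le> c' \<Longrightarrow> c' < p \<Longrightarrow> \<eta> c \<le> \<eta> c'" using q by blast
        fix c assume "q \<le> c" "c < p"
        then have "\<eta> c \<le> Le" using q by (intro lim_le_nondec[OF Le]) auto
        then show "\<eta> c \<le> max (\<eta> p) Le" by simp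
      qed simp
      then show ?thesis using q by blast
    qed
    then obtain q where q: "0 \<le> q" "q < p" "nvb \<eta> q p" by blast
    have "nvb \<eta> 0 q" using IH[OF q(1) q(2)] .
    then show ?thesis using nvb_join[of \<eta> 0 q p] q by simp
  qed
next
  fix p :: real assume p0: "0 \<le> p" and Pp: "nvb \<eta> 0 p"
  have "\<exists>d>0. \<forall>t. p \<le> t \<and> t \<le> p + d \<longrightarrow> nvb \<eta> p t"
  proof (cases "0 < x p")
    case True
    obtain d where d: "d > 0" "\<forall>c c'. p \<le> c \<longrightarrow> c \<le> c' \<longrightarrow> c' \<le> p + d \<longrightarrow> \<eta> c' \<le> \<eta> c"
      using right_noninc[OF p0 True] by blast
    have "nvb \<eta> p t" if t: "p \<le> t" "t \<le> p + d" for t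
    proof -
      have "nvb \<eta> p t \<and> NV \<eta> p t \<le> \<eta> p - \<eta> t"
      proof (rule NV_noninc)
        show "p \<le> t" using t by simp
        show "\<And>c c'. p \<le> c \<Longrightarrow> c \<le> c' \<Longrightarrow> c' < t \<Longrightarrow> \<eta> c' \<le> \<eta> c" using d(2) t by simp
        show "\<And>c. p \<le> c \<Longrightarrow> c < t \<Longrightarrow> \<eta> t \<le> \<eta> c" using d(2) t by simp
      qed simp
      then show ?thesis by simp
    qed
    then show ?thesis using d(1) by blast
  next
    case False
    then have "x p < a" using Lx_cases[of "x p"] by blast
    obtain d where d: "d > 0" "\<forall>c c'. p \<le> c \<longrightarrow> c \<le> c' \<longrightarrow> c' \<le> p + d \<longrightarrow> \<eta> c \<le> \<eta> c'"
      using right_nondec[OF p0 \<open>x p < a\<close>] by blast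
    have "nvb \<eta> p t" if t: "p \<le> t" "t \<le> p + d" for t
    proof -
      have "nvb \<eta> p t \<and> NV \<eta> p t \<le> \<eta> t - \<eta> t"
      proof (rule NV_nondec)
        show "p \<le> t" using t by simp
        show "\<And>c c'. p \<le> c \<Longrightarrow> c \<le> c' \<Longrightarrow> c' < t \<Longrightarrow> \<eta> c \<le> \<eta> c'" using d(2) t by simp
        show "\<And>c. p \<le> c \<Longrightarrow> c < t \<Longrightarrow> \<eta> c \<le> \<eta> t" using d(2) t by simp
      qed simp
      then show ?thesis by simp
    qed
    then show ?thesis using d(1) by blast
  qed
  then obtain d where d: "d > 0" "\<forall>t. p \<le> t \<and> t \<le> p + d \<longrightarrow> nvb \<eta> p t" by blast
  have "nvb \<eta> 0 t" if "p \<le> t" "t \<le> p + d" for t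
    using nvb_join[of \<eta> 0 p t] Pp d(2) that p0 by simp
  then show "\<exists>d>0. \<forall>t. p \<le> t \<and> t \<le> p + d \<longrightarrow> nvb \<eta> 0 t" using d(1) by blast
qed

definition eu :: "real \<Rightarrow> real" where "eu t = max (- \<eta> 0) 0 + NV \<eta> 0 t"
definition el :: "real \<Rightarrow> real" where "el t = \<eta> t + eu t"

lemma nvb_sub: "0 \<le> s \<Longrightarrow> s \<le> t \<Longrightarrow> nvb \<eta> s t"
  using nvb_split[OF nvb_all[of t]] by simp

lemma eu_diff: "0 \<le> s \<Longrightarrow> s \<le> t \<Longrightarrow> eu t - eu s = NV \<eta> s t"
  using NV_add[OF nvb_all[of t], of s] unfolding eu_def by simp

lemma eu_mono: "0 \<le> s \<Longrightarrow> s \<le> t \<Longrightarrow> eu s \<le> eu t"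
  using eu_diff[of s t] NV_nonneg[OF nvb_sub[of s t]] by simp

lemma el_mono: "0 \<le> s \<Longrightarrow> s \<le> t \<Longrightarrow> el s \<le> el t"
  using eu_diff[of s t] NV_two[OF nvb_sub[of s t]] unfolding el_def by simp

lemma eu0: "eu 0 = max (- \<eta> 0) 0"
  unfolding eu_def by (simp add: NV_same)

lemma NV_right_noninc:
  assumes "0 \<le> p" "\<forall>c c'. p \<le> c \<longrightarrow> c \<le> c' \<longrightarrow> c' \<le> p + d \<longrightarrow> \<eta> c' \<le> \<eta> c" "p \<le> t" "t \<le> p + d"
  shows "NV \<eta> p t = \<eta> p - \<eta> t"
proof -
  have "nvb \<eta> p t \<and> NV \<eta> p t \<le> \<eta> p - \<eta> t"
  proof (rule NV_noninc)
    show "p \<le> t" using assms by simp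
    show "\<And>c c'. p \<le> c \<Longrightarrow> c \<le> c' \<Longrightarrow> c' < t \<Longrightarrow> \<eta> c' \<le> \<eta> c" using assms by simp
    show "\<And>c. p \<le> c \<Longrightarrow> c < t \<Longrightarrow> \<eta> t \<le> \<eta> c" using assms by simp
  qed simp
  moreover have "max (\<eta> p - \<eta> t) 0 \<le> NV \<eta> p t" using NV_two[OF nvb_sub[of p t]] assms by simp
  ultimately show ?thesis by linarith
qed

lemma NV_right_nondec:
  assumes "0 \<le> p" "\<forall>c c'. p \<le> c \<longrightarrow> c \<le> c' \<longrightarrow> c' \<le> p + d \<longrightarrow> \<eta> c \<le> \<eta> c'" "p \<le> t" "t \<le> p + d"
  shows "NV \<eta> p t = 0"
proof -
  have "nvb \<eta> p t \<and> NV \<eta> p t \<le> \<eta> t - \<eta> t"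
  proof (rule NV_nondec)
    show "p \<le> t" using assms by simp
    show "\<And>c c'. p \<le> c \<Longrightarrow> c \<le> c' \<Longrightarrow> c' < t \<Longrightarrow> \<eta> c \<le> \<eta> c'" using assms by simp
    show "\<And>c. p \<le> c \<Longrightarrow> c < t \<Longrightarrow> \<eta> c \<le> \<eta> t" using assms by simp
  qed simp
  moreover have "0 \<le> NV \<eta> p t" using NV_nonneg[OF nvb_sub[of p t]] assms by simp
  ultimately show ?thesis by linarith
qed

lemma eu_right:
  assumes "0 \<le> p"
  shows "\<exists>d>0. \<forall>r. p \<le> r \<longrightarrow> r \<le> p + d \<longrightarrow> \<bar>eu r - eu p\<bar> \<le> \<bar>\<eta> r - \<eta> p\<bar>"
proof (cases "0 < x p")
  case True
  obtain d where d: "d > 0" "\<forall>c c'. p \<le> c \<longrightarrow> c \<le> c' \<longrightarrow> c' \<le> p + d \<longrightarrow> \<eta> c' \<le> \<eta> c"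
    using right_noninc[OF assms True] by blast
  have "\<bar>eu r - eu p\<bar> \<le> \<bar>\<eta> r - \<eta> p\<bar>" if "p \<le> r" "r \<le> p + d" for r
    using eu_diff[of p r] NV_right_noninc[OF assms d(2) that] assms that by simp
  then show ?thesis using d(1) by blast
next
  case False
  then have "x p < a" using Lx_cases[of "x p"] by blast
  obtain d where d: "d > 0" "\<forall>c c'. p \<le> c \<longrightarrow> c \<le> c' \<longrightarrow> c' \<le> p + d \<longrightarrow> \<eta> c \<le> \<eta> c'"
    using right_nondec[OF assms \<open>x p < a\<close>] by blast
  have "\<bar>eu r - eu p\<bar> \<le> \<bar>\<eta> r - \<eta> p\<bar>" if "p \<le> r" "r \<le> p + d" for r
    using eu_diff[of p r] NV_right_nondec[OF assms d(2) that] assms that by simp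
  then show ?thesis using d(1) by blast
qed

lemma cadlag_eu: "cadlag eu"
  unfolding cadlag_def
proof (intro conjI allI impI)
  fix p :: real assume p: "0 \<le> p"
  show "continuous (at_right p) eu"
  proof (rule right_cont_I)
    fix e :: real assume e: "0 < e"
    obtain d where d: "d > 0" "\<forall>r. p \<le> r \<longrightarrow> r \<le> p + d \<longrightarrow> \<bar>eu r - eu p\<bar> \<le> \<bar>\<eta> r - \<eta> p\<bar>"
      using eu_right[OF p] by blast
    have "continuous (at_right p) \<eta>" using ce p unfolding cadlag_def by simp
    from right_cont_D[OF this e] obtain b where b: "b > p" "\<forall>y. p < y \<and> y < b \<longrightarrow> \<bar>\<eta> y - \<eta> p\<bar> < e" by blast
    have "\<bar>eu y - eu p\<bar> < e" if y: "p < y" "y < min b (p + d)" for y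
    proof -
      have "\<bar>eu y - eu p\<bar> \<le> \<bar>\<eta> y - \<eta> p\<bar>" using d(2) y by simp
      moreover have "\<bar>\<eta> y - \<eta> p\<bar> < e" using b(2) y by simp
      ultimately show ?thesis by linarith
    qed
    then show "\<exists>b>p. \<forall>y. p < y \<and> y < b \<longrightarrow> \<bar>eu y - eu p\<bar> < e" using b(1) d(1)
      by (intro exI[of _ "min b (p + d)"]) auto
  qed
next
  fix p :: real assume p: "0 < p"
  show "\<exists>l. (eu \<longlongrightarrow> l) (at_left p)"
    by (rule mono_left_lim[OF p, of eu "eu p"]) (use eu_mono in auto)
qed

lemma cadlag_el: "cadlag el"
  unfolding el_def[abs_def] by (rule cadlag_add[OF ce cadlag_eu])

lemma nondecr_eu: "nondecr eu"
  unfolding nondecr_def using cadlag_eu eu_mono by (auto intro: mono_onI)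

lemma nondecr_el: "nondecr el"
  unfolding nondecr_def using cadlag_el el_mono by (auto intro: mono_onI)

lemma eu0_nonneg: "0 \<le> eu 0" using eu0 by simp
lemma el0_nonneg: "0 \<le> el 0" using eu0 unfolding el_def by simp

lemma eu_const_right:
  assumes "0 \<le> p" "x p < a"
  shows "\<exists>d>0. \<forall>r. p \<le> r \<longrightarrow> r \<le> p + d \<longrightarrow> eu r = eu p \<and> x r < a"
proof -
  obtain d where d: "d > 0" "\<forall>c c'. p \<le> c \<longrightarrow> c \<le> c' \<longrightarrow> c' \<le> p + d \<longrightarrow> \<eta> c \<le> \<eta> c'"
      "\<forall>r. p \<le> r \<longrightarrow> r \<le> p + d \<longrightarrow> x r < a"
    using right_nondec[OF assms] by blast
  have "eu r = eu p" if "p \<le> r" "r \<le> p + d" for r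
    using eu_diff[of p r] NV_right_nondec[OF assms(1) d(2) that] assms that by simp
  then show ?thesis using d by blast
qed

lemma el_const_right:
  assumes "0 \<le> p" "0 < x p"
  shows "\<exists>d>0. \<forall>r. p \<le> r \<longrightarrow> r \<le> p + d \<longrightarrow> el r = el p \<and> 0 < x r"
proof -
  obtain d where d: "d > 0" "\<forall>c c'. p \<le> c \<longrightarrow> c \<le> c' \<longrightarrow> c' \<le> p + d \<longrightarrow> \<eta> c' \<le> \<eta> c"
      "\<forall>r. p \<le> r \<longrightarrow> r \<le> p + d \<longrightarrow> 0 < x r"
    using right_noninc[OF assms] by blast
  have "el r = el p" if "p \<le> r" "r \<le> p + d" for r
    using eu_diff[of p r] NV_right_noninc[OF assms(1) d(2) that] assms that unfolding el_def by simp
  then show ?thesis using d by blast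
qed

lemma close_point:
  assumes "(\<eta> \<longlongrightarrow> Le) (at_left p)" "q0 < p" "0 < e"
  shows "\<exists>q. q0 \<le> q \<and> q < p \<and> \<bar>\<eta> q - Le\<bar> < e"
proof -
  obtain b where b: "b < p" "\<forall>y. b < y \<and> y < p \<longrightarrow> \<bar>\<eta> y - Le\<bar> < e" using left_lim_D[OF assms(1,3)] by blast
  obtain q where q: "max b q0 < q" "q < p" using dense[of "max b q0" p] b(1) assms(2) by auto
  then show ?thesis using b(2) by (intro exI[of _ q]) auto
qed

lemma eu_left:
  assumes "0 < p" "x p < a" "0 < e"
  shows "\<exists>q<p. 0 \<le> q \<and> eu p - eu q < e"
proof -
  obtain Lx where Lx: "(x \<longlongrightarrow> Lx) (at_left p)" using left_lim_x[OF assms(1)] by blast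
  obtain Le where Le: "(\<eta> \<longlongrightarrow> Le) (at_left p)" using left_lim_eta[OF assms(1)] by blast
  have LeJ: "Le \<le> \<eta> p" using Jb[OF assms(1,2) Le] .
  show ?thesis
  proof (cases "0 < Lx")
    case True
    obtain q0 where q0: "0 \<le> q0" "q0 < p" "\<forall>c c'. q0 \<le> c \<longrightarrow> c \<le> c' \<longrightarrow> c' < p \<longrightarrow> \<eta> c' \<le> \<eta> c"
      using left_noninc[OF assms(1) Lx True] by blast
    obtain q where q: "q0 \<le> q" "q < p" "\<bar>\<eta> q - Le\<bar> < e" using close_point[OF Le q0(2) assms(3)] by blast
    have "nvb \<eta> q p \<and> NV \<eta> q p \<le> \<eta> q - Le"
    proof (rule NV_noninc)
      show "q \<le> p" using q by simp
      show "\<And>c c'. q \<le> c \<Longrightarrow> c \<le> c' \<Longrightarrow> c' < p \<Longrightarrow> \<eta> c' \<le> \<eta> c" using q q0 by simp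
      fix c assume "q \<le> c" "c < p"
      then show "Le \<le> \<eta> c" using q q0 by (intro lim_ge_noninc[OF Le]) auto
    qed (rule LeJ)
    moreover have "eu p - eu q = NV \<eta> q p" using eu_diff[of q p] q q0 by simp
    ultimately show ?thesis using q q0 by (intro exI[of _ q]) auto
  next
    case False
    then have "Lx < a" using Lx_cases by blast
    obtain q0 where q0: "0 \<le> q0" "q0 < p" "\<forall>c c'. q0 \<le> c \<longrightarrow> c \<le> c' \<longrightarrow> c' < p \<longrightarrow> \<eta> c \<le> \<eta> c'"
      using left_nondec[OF assms(1) Lx \<open>Lx < a\<close>] by blast
    have "nvb \<eta> q0 p \<and> NV \<eta> q0 p \<le> \<eta> p - \<eta> p"
    proof (rule NV_nondec)
      show "q0 \<le> p" using q0 by simp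
      show "\<And>c c'. q0 \<le> c \<Longrightarrow> c \<le> c' \<Longrightarrow> c' < p \<Longrightarrow> \<eta> c \<le> \<eta> c'" using q0 by simp
      fix c assume "q0 \<le> c" "c < p"
      then have "\<eta> c \<le> Le" using q0 by (intro lim_le_nondec[OF Le]) auto
      then show "\<eta> c \<le> \<eta> p" using LeJ by simp
    qed simp
    moreover have "eu p - eu q0 = NV \<eta> q0 p" using eu_diff[of q0 p] q0 by simp
    ultimately show ?thesis using q0 assms(3) by (intro exI[of _ q0]) auto
  qed
qed

lemma el_left:
  assumes "0 < p" "0 < x p" "0 < e"
  shows "\<exists>q<p. 0 \<le> q \<and> el p - el q < e"
proof -
  obtain Lx where Lx: "(x \<longlongrightarrow> Lx) (at_left p)" using left_lim_x[OF assms(1)] by blast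
  obtain Le where Le: "(\<eta> \<longlongrightarrow> Le) (at_left p)" using left_lim_eta[OF assms(1)] by blast
  have LeJ: "\<eta> p \<le> Le" using Ja[OF assms(1,2) Le] .
  show ?thesis
  proof (cases "0 < Lx")
    case True
    obtain q0 where q0: "0 \<le> q0" "q0 < p" "\<forall>c c'. q0 \<le> c \<longrightarrow> c \<le> c' \<longrightarrow> c' < p \<longrightarrow> \<eta> c' \<le> \<eta> c"
      using left_noninc[OF assms(1) Lx True] by blast
    have "nvb \<eta> q0 p \<and> NV \<eta> q0 p \<le> \<eta> q0 - \<eta> p"
    proof (rule NV_noninc)
      show "q0 \<le> p" using q0 by simp
      show "\<And>c c'. q0 \<le> c \<Longrightarrow> c \<le> c' \<Longrightarrow> c' < p \<Longrightarrow> \<eta> c' \<le> \<eta> c" using q0 by simp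
      fix c assume "q0 \<le> c" "c < p"
      then have "Le \<le> \<eta> c" using q0 by (intro lim_ge_noninc[OF Le]) auto
      then show "\<eta> p \<le> \<eta> c" using LeJ by simp
    qed simp
    moreover have "eu p - eu q0 = NV \<eta> q0 p" using eu_diff[of q0 p] q0 by simp
    ultimately show ?thesis using q0 assms(3) unfolding el_def by (intro exI[of _ q0]) auto
  next
    case False
    then have "Lx < a" using Lx_cases by blast
    obtain q0 where q0: "0 \<le> q0" "q0 < p" "\<forall>c c'. q0 \<le> c \<longrightarrow> c \<le> c' \<longrightarrow> c' < p \<longrightarrow> \<eta> c \<le> \<eta> c'"
      using left_nondec[OF assms(1) Lx \<open>Lx < a\<close>] by blast
    obtain q where q: "q0 \<le> q" "q < p" "\<bar>\<eta> q - Le\<bar> < e" using close_point[OF Le q0(2) assms(3)] by blast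
    have "nvb \<eta> q p \<and> NV \<eta> q p \<le> Le - \<eta> p"
    proof (rule NV_nondec)
      show "q \<le> p" using q by simp
      show "\<And>c c'. q \<le> c \<Longrightarrow> c \<le> c' \<Longrightarrow> c' < p \<Longrightarrow> \<eta> c \<le> \<eta> c'" using q q0 by simp
      fix c assume "q \<le> c" "c < p"
      then show "\<eta> c \<le> Le" using q q0 by (intro lim_le_nondec[OF Le]) auto
    qed (rule LeJ)
    moreover have "eu p - eu q = NV \<eta> q p" using eu_diff[of q p] q q0 by simp
    ultimately show ?thesis using q q0 unfolding el_def by (intro exI[of _ q]) auto
  qed
qed

lemma LS_eu: "LS_null eu {s. 0 \<le> s \<and> x s < a}"
proof -
  have "{s. 0 \<le> s \<and> x s < a} \<in> sets borel \<and> emeasure (interval_measure (ext0 eu)) {s. 0 \<le> s \<and> x s < a} = 0"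
  proof (rule null_cover)
    show "sets (interval_measure (ext0 eu)) = sets borel" by simp
    fix p assume "p \<in> {s. 0 \<le> s \<and> x s < a}"
    then have p: "0 \<le> p" "x p < a" by auto
    obtain d where d: "d > 0" "\<forall>r. p \<le> r \<longrightarrow> r \<le> p + d \<longrightarrow> eu r = eu p \<and> x r < a"
      using eu_const_right[OF p] by blast
    have sub: "{p..<p+d} \<subseteq> {s. 0 \<le> s \<and> x s < a}" using d p by auto
    have "emeasure (interval_measure (ext0 eu)) {p..<p+d} = 0"
    proof (rule IM[OF nondecr_eu eu0_nonneg p(1) d(1)])
      show "\<And>r. p \<le> r \<Longrightarrow> r \<le> p + d \<Longrightarrow> eu r = eu p" using d by blast
      fix e :: real assume e: "0 < e"
      show "\<exists>q<p. ext0 eu p - ext0 eu q < e"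
      proof (cases "p = 0")
        case True
        have "eu 0 = 0" using eu0 Zb p True by simp
        then show ?thesis using True e by (intro exI[of _ "-1"]) (simp add: ext0_def)
      next
        case False
        then have "0 < p" using p by simp
        obtain q where "q < p" "0 \<le> q" "eu p - eu q < e" using eu_left[OF \<open>0 < p\<close> p(2) e] by blast
        then show ?thesis using p by (intro exI[of _ q]) (simp add: ext0_def)
      qed
    qed
    then show "\<exists>d>0. {p..<p+d} \<subseteq> {s. 0 \<le> s \<and> x s < a} \<and> emeasure (interval_measure (ext0 eu)) {p..<p+d} = 0"
      using d(1) sub by blast
  qed
  then show ?thesis unfolding LS_null_def by simp
qed

lemma LS_el: "LS_null el {s. 0 \<le> s \<and> 0 < x s}"
proof -
  have "{s. 0 \<le> s \<and> 0 < x s} \<in> sets borel \<and> emeasure (interval_measure (ext0 el)) {s. 0 \<le> s \<and> 0 < x s} = 0"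
  proof (rule null_cover)
    show "sets (interval_measure (ext0 el)) = sets borel" by simp
    fix p assume "p \<in> {s. 0 \<le> s \<and> 0 < x s}"
    then have p: "0 \<le> p" "0 < x p" by auto
    obtain d where d: "d > 0" "\<forall>r. p \<le> r \<longrightarrow> r \<le> p + d \<longrightarrow> el r = el p \<and> 0 < x r"
      using el_const_right[OF p] by blast
    have sub: "{p..<p+d} \<subseteq> {s. 0 \<le> s \<and> 0 < x s}" using d p by auto
    have "emeasure (interval_measure (ext0 el)) {p..<p+d} = 0"
    proof (rule IM[OF nondecr_el el0_nonneg p(1) d(1)])
      show "\<And>r. p \<le> r \<Longrightarrow> r \<le> p + d \<Longrightarrow> el r = el p" using d by blast
      fix e :: real assume e: "0 < e"
      show "\<exists>q<p. ext0 el p - ext0 el q < e"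
      proof (cases "p = 0")
        case True
        have "el 0 = 0" using eu0 Za p True unfolding el_def by simp
        then show ?thesis using True e by (intro exI[of _ "-1"]) (simp add: ext0_def)
      next
        case False
        then have "0 < p" using p by simp
        obtain q where "q < p" "0 \<le> q" "el p - el q < e" using el_left[OF \<open>0 < p\<close> p(2) e] by blast
        then show ?thesis using p by (intro exI[of _ q]) (simp add: ext0_def)
      qed
    qed
    then show "\<exists>d>0. {p..<p+d} \<subseteq> {s. 0 \<le> s \<and> 0 < x s} \<and> emeasure (interval_measure (ext0 el)) {p..<p+d} = 0"
      using d(1) sub by blast
  qed
  then show ?thesis unfolding LS_null_def by simp
qed

theorem decomp:
  "\<exists>\<eta>l \<eta>u. nondecr \<eta>l \<and> nondecr \<eta>u \<and> \<eta>l 0 \<ge> 0 \<and> \<eta>u 0 \<ge> 0 \<and>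
        (\<forall>t\<ge>0. \<eta> t = \<eta>l t - \<eta>u t) \<and>
        LS_null \<eta>l {s. 0 \<le> s \<and> x s > 0} \<and>
        LS_null \<eta>u {s. 0 \<le> s \<and> x s < a}"
  using nondecr_el nondecr_eu el0_nonneg eu0_nonneg LS_el LS_eu
  by (intro exI[of _ el] exI[of _ eu]) (auto simp: el_def)

lemma bv_eta: "bv \<eta>"
  by (rule bv_from_decomp[OF ce nondecr_el nondecr_eu]) (simp add: el_def)

end


lemma LS_Ioc_const:
  assumes G: "nondecr G" "0 \<le> G 0" and N: "LS_null G A" and "0 \<le> u" "u \<le> t" "{u<..t} \<subseteq> A"
  shows "G t = G u"
proof -
  have "emeasure (interval_measure (ext0 G)) {u<..t} \<le> emeasure (interval_measure (ext0 G)) A"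
    using N assms(6) unfolding LS_null_def by (intro emeasure_mono) auto
  also have "\<dots> = 0" using N unfolding LS_null_def by simp
  finally have "ennreal (ext0 G t - ext0 G u) \<le> 0" using ext0_Ioc[OF G assms(5)] by simp
  then have "ennreal (G t - G u) = 0" using assms(4,5) by (simp add: ext0_def)
  then have "G t - G u \<le> 0" by (simp add: ennreal_eq_0_iff)
  moreover have "G u \<le> G t" using G(1) assms(4,5) unfolding nondecr_def by (auto intro: mono_onD)
  ultimately show ?thesis by simp
qed

lemma MB:
  assumes G: "nondecr G" "0 \<le> G 0" and e: "0 < e"
  shows "\<exists>q<s. emeasure (interval_measure (ext0 G)) {q<..<s} < ennreal e"
proof -
  let ?M = "interval_measure (ext0 G)"
  define A where "A n = {s - 1 / real (Suc n) <..< s}" for n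
  have dec: "decseq A"
  proof (rule decseq_SucI)
    fix n
    have "1 / real (Suc (Suc n)) \<le> 1 / real (Suc n)" by (simp add: frac_le)
    then show "A (Suc n) \<subseteq> A n" unfolding A_def by auto
  qed
  have fin: "emeasure ?M (A n) \<noteq> \<infinity>" for n
  proof -
    have "A n \<subseteq> {s - 1 / real (Suc n) <.. s}" unfolding A_def by auto
    then have "emeasure ?M (A n) \<le> emeasure ?M {s - 1 / real (Suc n) <.. s}" by (intro emeasure_mono) auto
    also have "\<dots> = ennreal (ext0 G s - ext0 G (s - 1 / real (Suc n)))" by (intro ext0_Ioc[OF G]) simp
    finally show ?thesis by (auto simp: top_unique)
  qed
  have "(\<Inter>n. A n) = {}"
  proof (rule ccontr)
    assume "(\<Inter>n. A n) \<noteq> {}"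
    then obtain z where z: "\<And>n. z \<in> A n" by blast
    then have "z < s" unfolding A_def by auto
    then obtain n where n: "1 / real (Suc n) < s - z"
      using reals_Archimedean[of "s - z"] by (auto simp: inverse_eq_divide)
    have "s - 1 / real (Suc n) < z" using z[of n] unfolding A_def by auto
    then show False using n by linarith
  qed
  moreover have "(\<lambda>n. emeasure ?M (A n)) \<longlonglongrightarrow> emeasure ?M (\<Inter>n. A n)"
  proof (rule Lim_emeasure_decseq)
    show "range A \<subseteq> sets ?M" by (auto simp: A_def)
    show "decseq A" by (rule dec)
  qed (rule fin)
  ultimately have "(\<lambda>n. emeasure ?M (A n)) \<longlonglongrightarrow> 0" by simp
  moreover have "(0::ennreal) < ennreal e" using e by simp
  ultimately have "eventually (\<lambda>n. emeasure ?M (A n) < ennreal e) sequentially"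
    by (rule order_tendstoD(2))
  then obtain n where "emeasure ?M (A n) < ennreal e" by (meson eventually_sequentially order_refl)
  moreover have "s - 1 / real (Suc n) < s" by simp
  ultimately show ?thesis unfolding A_def by blast
qed

lemma LS_small:
  assumes G: "nondecr G" "0 \<le> G 0" and N: "LS_null G A" and st: "s \<le> t" "{s..t} \<subseteq> A" and e: "0 < e"
  shows "\<exists>q<s. \<forall>u. q \<le> u \<longrightarrow> u < s \<longrightarrow> ext0 G t - ext0 G u < e"
proof -
  let ?M = "interval_measure (ext0 G)"
  obtain q where q: "q < s" "emeasure ?M {q<..<s} < ennreal e" using MB[OF G e] by blast
  have "ext0 G t - ext0 G u < e" if u: "q \<le> u" "u < s" for u
  proof -
    have "ennreal (ext0 G t - ext0 G u) = emeasure ?M {u<..t}" using u st by (intro ext0_Ioc[OF G, symmetric]) simp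
    also have "\<dots> \<le> emeasure ?M ({u<..<s} \<union> A)"
    proof (rule emeasure_mono)
      show "{u<..t} \<subseteq> {u<..<s} \<union> A"
      proof
        fix z assume z: "z \<in> {u<..t}"
        show "z \<in> {u<..<s} \<union> A"
        proof (cases "z < s")
          case True then show ?thesis using z by auto
        next
          case False then have "z \<in> {s..t}" using z by auto
          then show ?thesis using st(2) by blast
        qed
      qed
      show "{u<..<s} \<union> A \<in> sets ?M" using N unfolding LS_null_def by auto
    qed
    also have "\<dots> \<le> emeasure ?M {u<..<s} + emeasure ?M A"
      using N unfolding LS_null_def by (intro emeasure_subadditive) auto
    also have "emeasure ?M A = 0" using N unfolding LS_null_def by simp
    also have "emeasure ?M {u<..<s} \<le> emeasure ?M {q<..<s}" using u by (intro emeasure_mono) auto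
    finally have "ennreal (ext0 G t - ext0 G u) < ennreal e" using q(2) by simp
    moreover have "0 \<le> ext0 G t - ext0 G u" using ext0_mono[OF G, of u t] u st by simp
    ultimately show ?thesis by (simp add: ennreal_less_iff)
  qed
  then show ?thesis using q(1) by blast
qed

lemma sk_le:
  assumes s1: "skorokhod a \<psi> \<phi>1 \<eta>1" and s2: "skorokhod a \<psi> \<phi>2 \<eta>2" and t0: "0 \<le> t"
  shows "\<phi>1 t \<le> \<phi>2 t"
proof (rule ccontr)
  assume "\<not> \<phi>1 t \<le> \<phi>2 t"
  then have Dt: "0 < \<phi>1 t - \<phi>2 t" by simp
  obtain l1 u1 where d1: "nondecr l1" "nondecr u1" "l1 0 \<ge> 0" "u1 0 \<ge> 0" "\<forall>t\<ge>0. \<eta>1 t = l1 t - u1 t"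
    "LS_null l1 {s. 0 \<le> s \<and> \<phi>1 s > 0}" "LS_null u1 {s. 0 \<le> s \<and> \<phi>1 s < a}"
    using s1 unfolding skorokhod_def by blast
  obtain l2 u2 where d2: "nondecr l2" "nondecr u2" "l2 0 \<ge> 0" "u2 0 \<ge> 0" "\<forall>t\<ge>0. \<eta>2 t = l2 t - u2 t"
    "LS_null l2 {s. 0 \<le> s \<and> \<phi>2 s > 0}" "LS_null u2 {s. 0 \<le> s \<and> \<phi>2 s < a}"
    using s2 unfolding skorokhod_def by blast
  have b1: "\<forall>t\<ge>0. \<phi>1 t = \<psi> t + \<eta>1 t \<and> 0 \<le> \<phi>1 t \<and> \<phi>1 t \<le> a" using s1 unfolding skorokhod_def by blast
  have b2: "\<forall>t\<ge>0. \<phi>2 t = \<psi> t + \<eta>2 t \<and> 0 \<le> \<phi>2 t \<and> \<phi>2 t \<le> a" using s2 unfolding skorokhod_def by blast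
  define D where "D r = \<phi>1 r - \<phi>2 r" for r
  have Deq: "D r = (l1 r - u1 r) - (l2 r - u2 r)" if "0 \<le> r" for r
    using b1 b2 d1(5) d2(5) that unfolding D_def by simp
  have mono: "G v \<le> G w" if "nondecr G" "0 \<le> v" "v \<le> w" for G v w
    using that unfolding nondecr_def by (auto intro: mono_onD)
  have key: "D w - D v \<le> (l1 w - l1 v) + (u2 w - u2 v)" if "0 \<le> v" "v \<le> w" for v w
    using Deq[of v] Deq[of w] mono[OF d1(2) that] mono[OF d2(1) that] that by simp
  have A1: "r \<in> {s. 0 \<le> s \<and> \<phi>1 s > 0}" and A2: "r \<in> {s. 0 \<le> s \<and> \<phi>2 s < a}"
    if "0 \<le> r" "0 < D r" for r
    using b1 b2 that unfolding D_def by force+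
  define S where "S = {r. 0 \<le> r \<and> r \<le> t \<and> (\<forall>u. r \<le> u \<and> u \<le> t \<longrightarrow> 0 < D u)}"
  have tS: "t \<in> S" using t0 Dt unfolding S_def D_def by auto
  have bdd: "bdd_below S" unfolding S_def bdd_below_def by auto
  define s where "s = Inf S"
  have s0: "0 \<le> s" unfolding s_def by (rule cInf_greatest) (use tS S_def in auto)
  have st: "s \<le> t" unfolding s_def by (rule cInf_lower[OF tS bdd])
  have pos: "0 < D u" if "s < u" "u \<le> t" for u
  proof -
    have "Inf S < u" using that(1) unfolding s_def .
    then have "\<exists>r\<in>S. r < u" using cInf_less_iff[of S u] tS bdd by auto
    then obtain r where "r \<in> S" "r < u" by blast
    then show ?thesis using that S_def by auto
  qed
  show False
  proof (cases "D s \<le> 0")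
    case True
    have "{s<..t} \<subseteq> {s. 0 \<le> s \<and> \<phi>1 s > 0}" using A1 pos s0 by auto
    then have "l1 t = l1 s" by (intro LS_Ioc_const[OF d1(1,3,6) s0 st])
    moreover have "{s<..t} \<subseteq> {s. 0 \<le> s \<and> \<phi>2 s < a}" using A2 pos s0 by auto
    then have "u2 t = u2 s" by (intro LS_Ioc_const[OF d2(2,4,7) s0 st])
    ultimately show False using key[OF s0 st] True Dt unfolding D_def by simp
  next
    case False
    then have posc: "0 < D u" if "s \<le> u" "u \<le> t" for u using pos that by (cases "s = u") auto
    have sub1: "{s..t} \<subseteq> {s. 0 \<le> s \<and> \<phi>1 s > 0}" using A1 posc s0 by auto
    have sub2: "{s..t} \<subseteq> {s. 0 \<le> s \<and> \<phi>2 s < a}" using A2 posc s0 by auto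
    define e where "e = D t / 2"
    have e: "0 < e" "D t = 2 * e" using Dt unfolding e_def D_def by simp_all
    obtain q1 where q1: "q1 < s" "\<forall>u. q1 \<le> u \<longrightarrow> u < s \<longrightarrow> ext0 l1 t - ext0 l1 u < e"
      using LS_small[OF d1(1,3,6) st sub1 e(1)] by blast
    obtain q2 where q2: "q2 < s" "\<forall>u. q2 \<le> u \<longrightarrow> u < s \<longrightarrow> ext0 u2 t - ext0 u2 u < e"
      using LS_small[OF d2(2,4,7) st sub2 e(1)] by blast
    show False
    proof (cases "s = 0")
      case True
      define u where "u = max q1 q2"
      have u: "u < 0" "q1 \<le> u" "q2 \<le> u" using q1 q2 True unfolding u_def by auto
      have "l1 t < e" "u2 t < e" using q1(2) q2(2) u True t0 by (auto simp: ext0_def)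
      moreover have "0 \<le> u1 t" "0 \<le> l2 t" using mono[OF d1(2) _ t0] mono[OF d2(1) _ t0] d1(4) d2(3) by force+
      ultimately show False using Deq[OF t0] e by linarith
    next
      case False
      then have sp: "0 < s" using s0 by simp
      define r0 where "r0 = max 0 (max q1 q2)"
      have r0: "0 \<le> r0" "r0 < s" "q1 \<le> r0" "q2 \<le> r0" using q1 q2 sp unfolding r0_def by auto
      have "r0 \<notin> S"
      proof
        assume "r0 \<in> S"
        then have "s \<le> r0" unfolding s_def by (rule cInf_lower[OF _ bdd])
        then show False using r0 by simp
      qed
      then obtain v where v: "r0 \<le> v" "v \<le> t" "\<not> 0 < D v" using r0 st unfolding S_def by auto
      have vs: "v < s"
      proof (rule ccontr)
        assume "\<not> v < s"
        then have "0 < D v" using posc v(2) by simp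
        then show False using v(3) by simp
      qed
      have v0: "0 \<le> v" "q1 \<le> v" "q2 \<le> v" using v r0 by auto
      have "l1 t - l1 v < e" using q1(2)[rule_format, of v] v0 vs t0 by (simp add: ext0_def)
      moreover have "u2 t - u2 v < e" using q2(2)[rule_format, of v] v0 vs t0 by (simp add: ext0_def)
      ultimately show False using key[of v t] v r0 e by linarith
    qed
  qed
qed

lemma sk_unique:
  assumes "skorokhod a \<psi> \<phi>1 \<eta>1" "skorokhod a \<psi> \<phi>2 \<eta>2" "0 \<le> t"
  shows "\<phi>1 t = \<phi>2 t"
  using sk_le[OF assms(1,2,3)] sk_le[OF assms(2,1,3)] by simp


lemma SUP_upper_real:
  fixes f :: "'a \<Rightarrow> real"
  shows "(\<And>s. s \<in> S \<Longrightarrow> f s \<le> M) \<Longrightarrow> s \<in> S \<Longrightarrow> f s \<le> (SUP s\<in>S. f s)"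
  by (rule cSUP_upper) (auto simp: bdd_above_def)

lemma SUP_least_real:
  fixes f :: "'a \<Rightarrow> real"
  shows "S \<noteq> {} \<Longrightarrow> (\<And>s. s \<in> S \<Longrightarrow> f s \<le> M) \<Longrightarrow> (SUP s\<in>S. f s) \<le> M"
  by (rule cSUP_least) auto

lemma INF_lower_real:
  fixes f :: "'a \<Rightarrow> real"
  shows "(\<And>s. s \<in> S \<Longrightarrow> M \<le> f s) \<Longrightarrow> s \<in> S \<Longrightarrow> (INF s\<in>S. f s) \<le> f s"
  by (rule cINF_lower) (auto simp: bdd_below_def)

lemma INF_greatest_real:
  fixes f :: "'a \<Rightarrow> real"
  shows "S \<noteq> {} \<Longrightarrow> (\<And>s. s \<in> S \<Longrightarrow> M \<le> f s) \<Longrightarrow> M \<le> (INF s\<in>S. f s)"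
  by (rule cINF_greatest) auto

lemma less_SUP_real:
  fixes f :: "'a \<Rightarrow> real"
  assumes "S \<noteq> {}" "\<And>s. s \<in> S \<Longrightarrow> f s \<le> M" "y < (SUP s\<in>S. f s)"
  shows "\<exists>s\<in>S. y < f s"
proof -
  have b: "bdd_above (f ` S)" using assms(2) by (auto simp: bdd_above_def)
  show ?thesis using less_cSUP_iff[OF assms(1) b] assms(3) by auto
qed

lemma max_lip: "\<bar>u - v\<bar> \<le> (e::real) \<Longrightarrow> max u 0 \<le> max v 0 + e"
  by (auto simp: max_def abs_le_iff)

locale spec =
  fixes a :: real and \<psi> :: "real \<Rightarrow> real"
  assumes a_pos: "0 < a" and cpsi: "cadlag \<psi>"
begin

definition g :: "real \<Rightarrow> real" where "g s = max (- \<psi> s) 0"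
definition ell :: "real \<Rightarrow> real" where "ell t = (SUP s\<in>{0..t}. g s)"

lemma Gamma0_eq: "Gamma0 \<psi> t = \<psi> t + ell t"
  unfolding Gamma0_def ell_def g_def by simp

lemma g_bdd: "0 \<le> t \<Longrightarrow> \<exists>M. \<forall>s. 0 \<le> s \<and> s \<le> t \<longrightarrow> g s \<le> M"
proof -
  assume "0 \<le> t"
  then obtain K where K: "\<forall>s. 0 \<le> s \<and> s \<le> t \<longrightarrow> \<bar>\<psi> s\<bar> \<le> K" using cadlag_bounded[OF cpsi] by blast
  have "g s \<le> K" if "0 \<le> s" "s \<le> t" for s using K that unfolding g_def by force
  then show ?thesis by blast
qed

lemma ell_upper: "0 \<le> s \<Longrightarrow> s \<le> t \<Longrightarrow> g s \<le> ell t"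
proof -
  assume s: "0 \<le> s" "s \<le> t"
  obtain M where M: "\<forall>s. 0 \<le> s \<and> s \<le> t \<longrightarrow> g s \<le> M" using g_bdd s by fastforce
  show ?thesis unfolding ell_def by (rule SUP_upper_real[of _ _ M]) (use M s in auto)
qed

lemma ell_least: "0 \<le> t \<Longrightarrow> (\<And>s. 0 \<le> s \<Longrightarrow> s \<le> t \<Longrightarrow> g s \<le> M) \<Longrightarrow> ell t \<le> M"
  unfolding ell_def by (rule SUP_least_real) auto

lemma g_nonneg: "0 \<le> g s" unfolding g_def by simp

lemma ell_nonneg: "0 \<le> t \<Longrightarrow> 0 \<le> ell t"
  using ell_upper[of t t] g_nonneg[of t] by simp

lemma ell_mono: "0 \<le> s \<Longrightarrow> s \<le> t \<Longrightarrow> ell s \<le> ell t"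
  by (rule ell_least) (use ell_upper in auto)

lemma ell0: "ell 0 = g 0"
  unfolding ell_def by simp

lemma cadlag_ell: "cadlag ell"
  unfolding cadlag_def
proof (intro conjI allI impI)
  fix p :: real assume p: "0 \<le> p"
  show "continuous (at_right p) ell"
  proof (rule right_cont_I)
    fix e :: real assume e: "0 < e"
    define e' where "e' = e / 2"
    have e': "0 < e'" "e = 2 * e'" using e by (simp_all add: e'_def)
    have "continuous (at_right p) \<psi>" using cpsi p unfolding cadlag_def by simp
    from right_cont_D[OF this e'(1)] obtain b where b: "b > p" "\<forall>y. p < y \<and> y < b \<longrightarrow> \<bar>\<psi> y - \<psi> p\<bar> < e'" by blast
    have "\<bar>ell y - ell p\<bar> < e" if y: "p < y" "y < b" for y
    proof -
      have "ell y \<le> ell p + e'"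
      proof (rule ell_least)
        show "0 \<le> y" using p y by simp
        fix s assume s: "0 \<le> s" "s \<le> y"
        show "g s \<le> ell p + e'"
        proof (cases "s \<le> p")
          case True then show ?thesis using ell_upper[OF s(1) True] e' by simp
        next
          case False
          then have "\<bar>\<psi> s - \<psi> p\<bar> < e'" using b(2) s y by auto
          then have "\<bar>(- \<psi> s) - (- \<psi> p)\<bar> \<le> e'" by simp
          then have "g s \<le> g p + e'" unfolding g_def by (rule max_lip)
          moreover have "g p \<le> ell p" using ell_upper[OF p] by simp
          ultimately show ?thesis by simp
        qed
      qed
      moreover have "ell p \<le> ell y" using ell_mono p y by simp
      ultimately show ?thesis using e' by simp
    qed
    then show "\<exists>b>p. \<forall>y. p < y \<and> y < b \<longrightarrow> \<bar>ell y - ell p\<bar> < e" using b(1) by blast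
  qed
next
  fix p :: real assume p: "0 < p"
  show "\<exists>l. (ell \<longlongrightarrow> l) (at_left p)"
    by (rule mono_left_lim[OF p, of ell "ell p"]) (use ell_mono in auto)
qed

definition phi :: "real \<Rightarrow> real" where "phi = Gamma0 \<psi>"
definition A :: "real \<Rightarrow> real" where "A s = max (phi s - a) 0"
definition I :: "real \<Rightarrow> real \<Rightarrow> real" where "I s t = (INF u\<in>{s..t}. phi u)"
definition T :: "real \<Rightarrow> real \<Rightarrow> real" where "T s t = min (A s) (I s t)"
definition U :: "real \<Rightarrow> real" where "U t = (SUP s\<in>{0..t}. T s t)"

lemma phi_eq: "phi t = \<psi> t + ell t"
  unfolding phi_def Gamma0_eq ..

lemma Lambda_eq: "Lambda a (Gamma0 \<psi>) t = phi t - U t"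
  unfolding Lambda_def U_def T_def A_def I_def phi_def ..

lemma cadlag_phi: "cadlag phi"
  unfolding phi_eq[abs_def] by (rule cadlag_add[OF cpsi cadlag_ell])

lemma phi_nonneg: "0 \<le> t \<Longrightarrow> 0 \<le> phi t"
  using ell_upper[of t t] unfolding phi_eq g_def by simp

lemma A_nonneg: "0 \<le> A s" unfolding A_def by simp

lemma A_le_phi: "0 \<le> t \<Longrightarrow> A t \<le> phi t"
  using phi_nonneg[of t] a_pos unfolding A_def by simp

lemma I_lower: "0 \<le> s \<Longrightarrow> s \<le> u \<Longrightarrow> u \<le> t \<Longrightarrow> I s t \<le> phi u"
  unfolding I_def by (rule INF_lower_real[where M=0]) (use phi_nonneg in auto)

lemma I_greatest: "s \<le> t \<Longrightarrow> (\<And>u. s \<le> u \<Longrightarrow> u \<le> t \<Longrightarrow> m \<le> phi u) \<Longrightarrow> m \<le> I s t"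
  unfolding I_def by (rule INF_greatest_real) auto

lemma I_nonneg: "0 \<le> s \<Longrightarrow> s \<le> t \<Longrightarrow> 0 \<le> I s t"
  by (rule I_greatest) (use phi_nonneg in auto)

lemma I_same: "0 \<le> t \<Longrightarrow> I t t = phi t"
  unfolding I_def by simp

lemma T_le_phi: "0 \<le> s \<Longrightarrow> s \<le> t \<Longrightarrow> T s t \<le> phi t"
  using I_lower[of s t t] unfolding T_def by simp

lemma U_upper: "0 \<le> s \<Longrightarrow> s \<le> t \<Longrightarrow> T s t \<le> U t"
  unfolding U_def by (rule SUP_upper_real[where M="phi t"]) (use T_le_phi in auto)

lemma U_least: "0 \<le> t \<Longrightarrow> (\<And>s. 0 \<le> s \<Longrightarrow> s \<le> t \<Longrightarrow> T s t \<le> M) \<Longrightarrow> U t \<le> M"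
  unfolding U_def by (rule SUP_least_real) auto

lemma U_le_phi: "0 \<le> t \<Longrightarrow> U t \<le> phi t"
  by (rule U_least) (use T_le_phi in auto)

lemma A_le_U: "0 \<le> t \<Longrightarrow> A t \<le> U t"
proof -
  assume t: "0 \<le> t"
  have "T t t = A t" unfolding T_def using I_same[OF t] A_le_phi[OF t] by simp
  then show ?thesis using U_upper[OF t order_refl] by simp
qed

lemma U_nonneg: "0 \<le> t \<Longrightarrow> 0 \<le> U t"
  using A_le_U A_nonneg order_trans by blast

lemma U0: "U 0 = A 0"
proof -
  have "U 0 = T 0 0" unfolding U_def by simp
  also have "\<dots> = A 0" unfolding T_def using I_same[of 0] A_le_phi[of 0] by simp
  finally show ?thesis .
qed

lemma U1:
  assumes "0 \<le> s" "s \<le> t" "\<And>u. s < u \<Longrightarrow> u \<le> t \<Longrightarrow> m \<le> phi u"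
  shows "min (U s) m \<le> U t"
proof -
  have key: "min (T q s) m \<le> T q t" if q: "0 \<le> q" "q \<le> s" for q
  proof -
    have "min (I q s) m \<le> I q t"
    proof (rule I_greatest)
      show "q \<le> t" using q assms by simp
      fix u assume u: "q \<le> u" "u \<le> t"
      show "min (I q s) m \<le> phi u"
      proof (cases "u \<le> s")
        case True then show ?thesis using I_lower[OF q(1) u(1) True] by simp
      next
        case False then show ?thesis using assms(3)[of u] u by simp
      qed
    qed
    then show ?thesis unfolding T_def by linarith
  qed
  show ?thesis
  proof (cases "U s \<le> m")
    case True
    have "U s \<le> U t"
    proof (rule U_least[OF assms(1)])
      fix q assume q: "0 \<le> q" "q \<le> s"
      have "T q s \<le> U s" using U_upper[OF q] .
      then have "T q s \<le> T q t" using key[OF q] True by linarith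
      moreover have "T q t \<le> U t" using U_upper[of q t] q assms by simp
      ultimately show "T q s \<le> U t" by simp
    qed
    then show ?thesis by simp
  next
    case False
    then have "m < (SUP q\<in>{0..s}. T q s)" unfolding U_def by simp
    then obtain q where q: "q \<in> {0..s}" "m < T q s"
      using less_SUP_real[of "{0..s}" "\<lambda>q. T q s" "phi s" m] T_le_phi assms(1) by force
    then have "m \<le> T q t" using key[of q] by auto
    moreover have "T q t \<le> U t" using U_upper[of q t] q assms by simp
    ultimately show ?thesis by simp
  qed
qed

lemma U2:
  assumes "0 \<le> s" "s \<le> t" "\<And>r. s < r \<Longrightarrow> r \<le> t \<Longrightarrow> A r \<le> M"
  shows "U t \<le> max (U s) M"
proof (rule U_least)
  show "0 \<le> t" using assms by simp
  fix q assume q: "0 \<le> q" "q \<le> t"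
  show "T q t \<le> max (U s) M"
  proof (cases "q \<le> s")
    case True
    have "I q t \<le> I q s"
      by (rule I_greatest) (use True q assms in \<open>auto intro: I_lower\<close>)
    then have "T q t \<le> T q s" unfolding T_def by linarith
    also have "\<dots> \<le> U s" using U_upper[OF q(1) True] .
    finally show ?thesis by simp
  next
    case False
    then have "A q \<le> M" using assms(3) q by simp
    then show ?thesis unfolding T_def by linarith
  qed
qed

lemma min_lb: "min x y \<le> z \<Longrightarrow> x \<le> y + c \<Longrightarrow> 0 \<le> c \<Longrightarrow> x - c \<le> (z::real)"
  unfolding min_def by (auto split: if_splits)

lemma max_ub: "z \<le> max x y \<Longrightarrow> y \<le> x + c \<Longrightarrow> 0 \<le> c \<Longrightarrow> z \<le> x + (c::real)"
  unfolding max_def by (auto split: if_splits)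

lemma U_step:
  assumes "0 \<le> y" "y \<le> z" "0 < e" "\<And>u. y \<le> u \<Longrightarrow> u \<le> z \<Longrightarrow> \<bar>phi u - L\<bar> \<le> e"
  shows "\<bar>U z - U y\<bar> \<le> 2 * e"
proof -
  have "min (U y) (L - e) \<le> U z"
  proof (rule U1)
    show "0 \<le> y" "y \<le> z" using assms by auto
    fix u assume u: "y < u" "u \<le> z"
    have "\<bar>phi u - L\<bar> \<le> e" using assms(4)[of u] u by simp
    then show "L - e \<le> phi u" by (simp add: abs_le_iff)
  qed
  moreover have "U y \<le> (L - e) + 2 * e" using U_le_phi[of y] assms(4)[of y] assms(1,2) by (auto simp: abs_le_iff)
  ultimately have lo: "U y - 2 * e \<le> U z" by (rule min_lb) (use assms in simp)
  have "U z \<le> max (U y) (max (L - a) 0 + e)"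
  proof (rule U2)
    show "0 \<le> y" "y \<le> z" using assms by auto
    fix r assume r: "y < r" "r \<le> z"
    have "\<bar>(phi r - a) - (L - a)\<bar> \<le> e" using assms(4)[of r] r by simp
    then show "A r \<le> max (L - a) 0 + e" unfolding A_def by (rule max_lip)
  qed
  moreover have "max (L - a) 0 + e \<le> U y + 2 * e"
  proof -
    have "\<bar>(L - a) - (phi y - a)\<bar> \<le> e" using assms(4)[of y] assms(2) by (simp add: abs_minus_commute)
    then have "max (L - a) 0 \<le> A y + e" unfolding A_def by (rule max_lip)
    then show ?thesis using A_le_U[OF assms(1)] by simp
  qed
  ultimately have hi: "U z \<le> U y + 2 * e" by (rule max_ub) (use assms in simp)
  show ?thesis using lo hi by (simp add: abs_le_iff)
qed

lemma cadlag_U: "cadlag U"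
  unfolding cadlag_def
proof (intro conjI allI impI)
  fix p :: real assume p: "0 \<le> p"
  show "continuous (at_right p) U"
  proof (rule right_cont_I)
    fix e :: real assume e: "0 < e"
    define e' where "e' = e / 4"
    have e': "0 < e'" "e = 4 * e'" using e by (simp_all add: e'_def)
    have "continuous (at_right p) phi" using cadlag_phi p unfolding cadlag_def by simp
    from right_cont_D[OF this e'(1)] obtain b where b: "b > p" "\<forall>y. p < y \<and> y < b \<longrightarrow> \<bar>phi y - phi p\<bar> < e'" by blast
    have "\<bar>U z - U p\<bar> < e" if z: "p < z" "z < b" for z
    proof -
      have "\<bar>U z - U p\<bar> \<le> 2 * e'"
      proof (rule U_step[OF p _ e'(1)])
        show "p \<le> z" using z by simp
        fix u assume "p \<le> u" "u \<le> z"
        then show "\<bar>phi u - phi p\<bar> \<le> e'"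
        proof (cases "u = p")
          case False
          then have "p < u" "u < b" using \<open>p \<le> u\<close> \<open>u \<le> z\<close> z by auto
          then have "\<bar>phi u - phi p\<bar> < e'" using b(2) by blast
          then show ?thesis by simp
        qed (use e' in simp)
      qed
      then show ?thesis using e' by simp
    qed
    then show "\<exists>b>p. \<forall>y. p < y \<and> y < b \<longrightarrow> \<bar>U y - U p\<bar> < e" using b(1) by blast
  qed
next
  fix p :: real assume p: "0 < p"
  obtain Lp where Lp: "(phi \<longlongrightarrow> Lp) (at_left p)" using cadlag_phi p unfolding cadlag_def by blast
  show "\<exists>l. (U \<longlongrightarrow> l) (at_left p)"
  proof (rule left_lim_cauchy)
    fix e :: real assume e: "0 < e"
    define e' where "e' = e / 4"
    have e': "0 < e'" "e = 4 * e'" using e by (simp_all add: e'_def)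
    obtain b where b: "b < p" "\<forall>y. b < y \<and> y < p \<longrightarrow> \<bar>phi y - Lp\<bar> < e'" using left_lim_D[OF Lp e'(1)] by blast
    define b' where "b' = max b 0"
    have b': "b' < p" "0 \<le> b'" "b \<le> b'" using b(1) p unfolding b'_def by auto
    have H: "\<bar>U z - U y\<bar> \<le> 2 * e'" if yz: "b' < y" "y \<le> z" "z < p" for y z
    proof (rule U_step)
      show "0 \<le> y" "y \<le> z" "0 < e'" using yz b' e' by auto
      fix u assume u: "y \<le> u" "u \<le> z"
      then have "b < u" "u < p" using yz b' by auto
      then have "\<bar>phi u - Lp\<bar> < e'" using b(2) by blast
      then show "\<bar>phi u - Lp\<bar> \<le> e'" by simp
    qed
    have "\<bar>U y - U z\<bar> < e" if yz: "b' < y" "y < p" "b' < z" "z < p" for y z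
    proof (cases "y \<le> z")
      case True then show ?thesis using H[of y z] yz e' by (simp add: abs_minus_commute)
    next
      case False then show ?thesis using H[of z y] yz e' by simp
    qed
    then show "\<exists>b<p. \<forall>y z. b < y \<and> y < p \<and> b < z \<and> z < p \<longrightarrow> \<bar>U y - U z\<bar> < e" using b'(1) by blast
  qed
qed

definition xb :: "real \<Rightarrow> real" where "xb t = phi t - U t"
definition et :: "real \<Rightarrow> real" where "et t = xb t - \<psi> t"

lemma et_eq: "et t = ell t - U t"
  unfolding et_def xb_def phi_eq by simp

lemma cadlag_xb: "cadlag xb"
  unfolding xb_def[abs_def] by (rule cadlag_diff[OF cadlag_phi cadlag_U])

lemma cadlag_et: "cadlag et"
  unfolding et_def[abs_def] by (rule cadlag_diff[OF cadlag_xb cpsi])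

lemma xb_bounds: "0 \<le> t \<Longrightarrow> 0 \<le> xb t \<and> xb t \<le> a"
  using U_le_phi[of t] A_le_U[of t] unfolding xb_def A_def by auto

lemma phi_bdd: "0 \<le> t \<Longrightarrow> \<exists>K. \<forall>u. 0 \<le> u \<and> u \<le> t \<longrightarrow> phi u \<le> K"
  using cadlag_bounded[OF cadlag_phi] by (metis abs_le_iff)

lemma Ia_spec:
  assumes e: "0 < e" and st: "0 \<le> s" "s \<le> t" and pos: "\<And>r. s < r \<Longrightarrow> r \<le> t \<Longrightarrow> e \<le> xb r"
  shows "et t \<le> et s"
proof -
  have "ell t \<le> max (ell s) (ell t - e)"
  proof (rule ell_least)
    show "0 \<le> t" using st by simp
    fix q assume q: "0 \<le> q" "q \<le> t"
    show "g q \<le> max (ell s) (ell t - e)"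
    proof (cases "q \<le> s")
      case True then show ?thesis using ell_upper[OF q(1) True] by simp
    next
      case False
      have "e \<le> xb q" using pos[of q] False q by simp
      moreover have "0 \<le> U q" using U_nonneg q by simp
      moreover have "ell q \<le> ell t" using ell_mono q by simp
      ultimately have "- \<psi> q \<le> ell t - e" unfolding xb_def phi_eq by simp
      moreover have "0 \<le> ell s" using ell_nonneg st by simp
      ultimately show ?thesis unfolding g_def
        by (intro max.boundedI) (auto intro: order_trans[OF _ max.cobounded2] order_trans[OF _ max.cobounded1])
    qed
  qed
  then have lt: "ell t \<le> ell s" using e by (simp add: max_def split: if_splits)
  have "U s \<le> U t"
  proof (cases "s = t")
    case False
    then have "s < t" using st by simp
    define m where "m = (INF u\<in>{s<..t}. phi u)"
    have ne: "{s<..t} \<noteq> {}" using \<open>s < t\<close> by simp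
    have mle: "m \<le> phi u" if "s < u" "u \<le> t" for u
      unfolding m_def by (rule INF_lower_real[where M=0]) (use that st phi_nonneg in auto)
    have Ur: "min (U s) m \<le> U r" if "s < r" "r \<le> t" for r
      by (rule U1) (use that st mle in auto)
    have "U s \<le> m"
    proof (rule ccontr)
      assume "\<not> U s \<le> m"
      then have "e + m \<le> phi r" if "s < r" "r \<le> t" for r
        using Ur[OF that] pos[OF that] unfolding xb_def by simp
      then have "e + m \<le> m" unfolding m_def by (intro INF_greatest_real[OF ne]) auto
      then show False using e by simp
    qed
    then show ?thesis using Ur[OF \<open>s < t\<close> order_refl] by simp
  qed simp
  show ?thesis unfolding et_eq using lt \<open>U s \<le> U t\<close> by simp
qed

lemma Ib_spec:
  assumes e: "0 < e" and st: "0 \<le> s" "s \<le> t" and low: "\<And>r. s < r \<Longrightarrow> r \<le> t \<Longrightarrow> xb r \<le> a - e"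
  shows "et s \<le> et t"
proof -
  have ls: "ell s \<le> ell t" using ell_mono st by simp
  have "U t \<le> U s"
  proof (cases "s = t")
    case False
    then have "s < t" using st by simp
    obtain K where K: "\<forall>u. 0 \<le> u \<and> u \<le> t \<longrightarrow> phi u \<le> K" using phi_bdd st by fastforce
    have Ubd: "U r \<le> K" if r: "s < r" "r \<le> t" for r
    proof -
      have "0 \<le> r" using r st by simp
      then have "U r \<le> phi r" "phi r \<le> K" using U_le_phi[of r] K r by auto
      then show ?thesis by simp
    qed
    define V where "V = (SUP r\<in>{s<..t}. U r)"
    have ne: "{s<..t} \<noteq> {}" using \<open>s < t\<close> by simp
    have UV: "U r \<le> V" if "s < r" "r \<le> t" for r
      unfolding V_def by (rule SUP_upper_real[where M=K]) (use that Ubd in auto)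
    have "U r \<le> max (U s) (V - e)" if r: "s < r" "r \<le> t" for r
    proof -
      have "U r \<le> max (U s) (max (V - e) 0)"
      proof (rule U2)
        show "0 \<le> s" "s \<le> r" using st r by auto
        fix q assume q: "s < q" "q \<le> r"
        have "xb q \<le> a - e" using low q r by simp
        moreover have "U q \<le> V" using UV q r by simp
        ultimately have "phi q - a \<le> V - e" unfolding xb_def by simp
        then show "A q \<le> max (V - e) 0" unfolding A_def by simp
      qed
      then show ?thesis using U_nonneg[OF st(1)] by (simp add: max_def split: if_splits)
    qed
    then have "V \<le> max (U s) (V - e)" unfolding V_def by (intro SUP_least_real[OF ne]) auto
    then have "V \<le> U s" using e by (simp add: max_def split: if_splits)
    then show ?thesis using UV[OF \<open>s < t\<close> order_refl] by simp
  qed simp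
  show ?thesis unfolding et_eq using ls \<open>U t \<le> U s\<close> by simp
qed

lemma Z_spec: "et 0 = g 0 - A 0" "xb 0 = phi 0 - A 0" "phi 0 = \<psi> 0 + g 0"
  unfolding et_eq xb_def phi_eq ell0 U0 by simp_all

lemma Za_spec: "0 < xb 0 \<Longrightarrow> et 0 \<le> 0"
proof -
  assume "0 < xb 0"
  then have "0 < phi 0" using Z_spec A_nonneg[of 0] by simp
  then have "0 < \<psi> 0" using Z_spec(3) unfolding g_def by (simp add: max_def split: if_splits)
  then have "g 0 = 0" unfolding g_def by simp
  then show ?thesis using Z_spec(1) A_nonneg[of 0] by simp
qed

lemma Zb_spec: "xb 0 < a \<Longrightarrow> 0 \<le> et 0"
proof -
  assume "xb 0 < a"
  then have "A 0 = 0" using Z_spec(2) unfolding A_def by (simp add: max_def split: if_splits)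
  then show ?thesis using Z_spec(1) g_nonneg[of 0] by simp
qed

lemma Ja_near:
  assumes t: "0 < t" and xt: "0 < xb t" and e: "0 < e"
  shows "\<exists>b<t. \<forall>q. b < q \<longrightarrow> q < t \<longrightarrow> et t - 3 * e \<le> et q"
proof -
  have t0: "0 \<le> t" using t by simp
  have "\<exists>b1<t. 0 \<le> b1 \<and> (\<forall>q. b1 < q \<longrightarrow> q < t \<longrightarrow> ell t - e \<le> ell q)"
  proof (cases "ell t \<le> e")
    case True
    have "ell t - e \<le> ell q" if "0 < q" for q using ell_nonneg[of q] that True by simp
    then show ?thesis using t by (intro exI[of _ 0]) auto
  next
    case False
    have "0 < phi t" using xt U_nonneg[OF t0] unfolding xb_def by simp
    then have "g t < ell t" using False e unfolding g_def phi_eq by simp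
    define d where "d = min e (ell t - g t)"
    have d: "0 < d" "d \<le> e" "g t \<le> ell t - d" using \<open>g t < ell t\<close> e unfolding d_def by auto
    obtain M where M: "\<forall>s. 0 \<le> s \<and> s \<le> t \<longrightarrow> g s \<le> M" using g_bdd t0 by blast
    have "ell t - d < (SUP s\<in>{0..t}. g s)" using d unfolding ell_def by simp
    then obtain q0 where q0: "q0 \<in> {0..t}" "ell t - d < g q0"
      using less_SUP_real[of "{0..t}" g M "ell t - d"] M t0 by force
    have "q0 \<noteq> t" using q0 d by auto
    then have q0t: "q0 < t" using q0 by simp
    have "ell t - e \<le> ell q" if "q0 < q" "q < t" for q
      using ell_upper[of q0 q] q0 that d by simp
    then show ?thesis using q0t q0 by (intro exI[of _ q0]) auto
  qed
  then obtain b1 where b1: "b1 < t" "0 \<le> b1" "\<forall>q. b1 < q \<longrightarrow> q < t \<longrightarrow> ell t - e \<le> ell q" by blast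
  obtain Lp where Lp: "(phi \<longlongrightarrow> Lp) (at_left t)" using cadlag_phi t unfolding cadlag_def by blast
  obtain b where b: "b < t" "\<forall>y. b < y \<and> y < t \<longrightarrow> \<bar>phi y - Lp\<bar> < e" using left_lim_D[OF Lp e] by blast
  define b2 where "b2 = max b b1"
  have b2: "b2 < t" "0 \<le> b2" "b \<le> b2" "b1 \<le> b2" using b b1 unfolding b2_def by auto
  have "et t - 3 * e \<le> et q" if q: "b2 < q" "q < t" for q
  proof -
    have q0: "0 \<le> q" using q b2 by simp
    have "min (U q) (min (Lp - e) (phi t)) \<le> U t"
    proof (rule U1)
      show "0 \<le> q" "q \<le> t" using q0 q by auto
      fix u assume u: "q < u" "u \<le> t"
      show "min (Lp - e) (phi t) \<le> phi u"
      proof (cases "u = t")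
        case False
        then have "\<bar>phi u - Lp\<bar> < e" using b(2) u q b2 by auto
        then show ?thesis by (simp add: abs_less_iff min.coboundedI1)
      qed simp
    qed
    moreover have "U q \<le> phi q" using U_le_phi[OF q0] .
    moreover have "\<bar>phi q - Lp\<bar> < e" using b(2) q b2 by auto
    moreover have "U t < phi t" using xt unfolding xb_def by simp
    ultimately have "U q - 2 * e \<le> U t" unfolding min_le_iff_disj by (auto simp: abs_less_iff)
    moreover have "ell t - e \<le> ell q" using b1(3) q b2 by auto
    ultimately show ?thesis unfolding et_eq by simp
  qed
  then show ?thesis using b2(1) by blast
qed

lemma Ja_spec:
  assumes t: "0 < t" and xt: "0 < xb t" and L: "(et \<longlongrightarrow> L) (at_left t)"
  shows "et t \<le> L"
proof (rule field_le_epsilon)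
  fix e :: real assume e: "0 < e"
  define e' where "e' = e / 3"
  have e': "0 < e'" "e = 3 * e'" using e by (simp_all add: e'_def)
  obtain b where b: "b < t" "\<forall>q. b < q \<longrightarrow> q < t \<longrightarrow> et t - 3 * e' \<le> et q" using Ja_near[OF t xt e'(1)] by blast
  have "et t - 3 * e' \<le> L"
  proof (rule tendsto_lowerbound[OF L])
    show "eventually (\<lambda>q. et t - 3 * e' \<le> et q) (at_left t)"
      unfolding eventually_at_left_field using b by blast
  qed simp
  then show "et t \<le> L + e" using e' by simp
qed

lemma Jb_near:
  assumes t: "0 < t" and xt: "xb t < a" and e: "0 < e"
  shows "\<exists>b<t. \<forall>q. b < q \<longrightarrow> q < t \<longrightarrow> et q \<le> et t + 2 * e"
proof -
  have t0: "0 \<le> t" using t by simp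
  obtain Lp where Lp: "(phi \<longlongrightarrow> Lp) (at_left t)" using cadlag_phi t unfolding cadlag_def by blast
  obtain b where b: "b < t" "\<forall>y. b < y \<and> y < t \<longrightarrow> \<bar>phi y - Lp\<bar> < e" using left_lim_D[OF Lp e] by blast
  define b2 where "b2 = max b 0"
  have b2: "b2 < t" "0 \<le> b2" "b \<le> b2" using b t unfolding b2_def by auto
  have "et q \<le> et t + 2 * e" if q: "b2 < q" "q < t" for q
  proof -
    have q0: "0 \<le> q" using q b2 by simp
    have "U t \<le> max (U q) (max (max (Lp - a) 0 + e) (A t))"
    proof (rule U2)
      show "0 \<le> q" "q \<le> t" using q0 q by auto
      fix r assume r: "q < r" "r \<le> t"
      show "A r \<le> max (max (Lp - a) 0 + e) (A t)"
      proof (cases "r = t")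
        case False
        then have "\<bar>phi r - Lp\<bar> < e" using b(2) r q b2 by auto
        then have "\<bar>(phi r - a) - (Lp - a)\<bar> \<le> e" by simp
        then have "A r \<le> max (Lp - a) 0 + e" unfolding A_def by (rule max_lip)
        then show ?thesis by (simp add: le_max_iff_disj)
      qed simp
    qed
    moreover have "max (Lp - a) 0 \<le> A q + e"
    proof -
      have "\<bar>phi q - Lp\<bar> < e" using b(2) q b2 by auto
      then have "\<bar>(Lp - a) - (phi q - a)\<bar> \<le> e" by simp
      then show ?thesis unfolding A_def by (rule max_lip)
    qed
    moreover have "A q \<le> U q" using A_le_U[OF q0] .
    moreover have "0 \<le> U q" using U_nonneg[OF q0] .
    moreover have "\<not> (0 < phi t - a \<and> U t \<le> phi t - a)" using xt unfolding xb_def by auto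
    ultimately have "U t \<le> U q + 2 * e" unfolding le_max_iff_disj A_def[of t] using e by (auto simp: max_def split: if_splits)
    moreover have "ell q \<le> ell t" using ell_mono q0 q by simp
    ultimately show ?thesis unfolding et_eq by simp
  qed
  then show ?thesis using b2(1) by blast
qed

lemma Jb_spec:
  assumes t: "0 < t" and xt: "xb t < a" and L: "(et \<longlongrightarrow> L) (at_left t)"
  shows "L \<le> et t"
proof -
  have "L \<le> et t + e" if e: "0 < e" for e
  proof -
    define e' where "e' = e / 2"
    have e': "0 < e'" "e = 2 * e'" using e by (simp_all add: e'_def)
    obtain b where b: "b < t" "\<forall>q. b < q \<longrightarrow> q < t \<longrightarrow> et q \<le> et t + 2 * e'" using Jb_near[OF t xt e'(1)] by blast
    have "L \<le> et t + 2 * e'"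
    proof (rule tendsto_upperbound[OF L])
      show "eventually (\<lambda>q. et q \<le> et t + 2 * e') (at_left t)"
        unfolding eventually_at_left_field using b by blast
    qed simp
    then show ?thesis using e' by simp
  qed
  then show ?thesis by (rule field_le_epsilon)
qed

end


context spec
begin

lemma dset_inst: "dset a xb et"
proof (unfold_locales)
  show "0 < a" by (rule a_pos)
  show "cadlag xb" by (rule cadlag_xb)
  show "cadlag et" by (rule cadlag_et)
  show "\<And>t. 0 \<le> t \<Longrightarrow> 0 \<le> xb t \<and> xb t \<le> a" by (rule xb_bounds)
  show "\<And>e s t. 0 < e \<Longrightarrow> 0 \<le> s \<Longrightarrow> s \<le> t \<Longrightarrow> (\<And>r. s < r \<Longrightarrow> r \<le> t \<Longrightarrow> e \<le> xb r) \<Longrightarrow> et t \<le> et s"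
    by (rule Ia_spec)
  show "\<And>e s t. 0 < e \<Longrightarrow> 0 \<le> s \<Longrightarrow> s \<le> t \<Longrightarrow> (\<And>r. s < r \<Longrightarrow> r \<le> t \<Longrightarrow> xb r \<le> a - e) \<Longrightarrow> et s \<le> et t"
    by (rule Ib_spec)
  show "\<And>t L. 0 < t \<Longrightarrow> 0 < xb t \<Longrightarrow> (et \<longlongrightarrow> L) (at_left t) \<Longrightarrow> et t \<le> L" by (rule Ja_spec)
  show "\<And>t L. 0 < t \<Longrightarrow> xb t < a \<Longrightarrow> (et \<longlongrightarrow> L) (at_left t) \<Longrightarrow> L \<le> et t" by (rule Jb_spec)
  show "0 < xb 0 \<Longrightarrow> et 0 \<le> 0" by (rule Za_spec)
  show "xb 0 < a \<Longrightarrow> 0 \<le> et 0" by (rule Zb_spec)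
qed

lemma sk_xb: "skorokhod a \<psi> xb et"
proof -
  interpret D: dset a xb et by (rule dset_inst)
  show ?thesis
    unfolding skorokhod_def
    using cadlag_xb D.bv_eta xb_bounds D.decomp by (auto simp: et_def)
qed

end

theorem theorem1p4:
  fixes a :: real and \<psi> :: "real \<Rightarrow> real"
  assumes "a > 0" and "cadlag \<psi>"
  shows "skorokhod a \<psi> (Lambda a (Gamma0 \<psi>)) (\<lambda>t. Lambda a (Gamma0 \<psi>) t - \<psi> t)
         \<and> (\<forall>t\<ge>0. Gamma0a a \<psi> t = Lambda a (Gamma0 \<psi>) t)"
proof -
  interpret S: spec a \<psi> using assms by unfold_locales
  have xeq: "Lambda a (Gamma0 \<psi>) = S.xb" by (rule ext) (simp add: S.Lambda_eq S.xb_def)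
  have eeq: "S.et = (\<lambda>t. S.xb t - \<psi> t)" by (rule ext) (simp add: S.et_def)
  have sk: "skorokhod a \<psi> (Lambda a (Gamma0 \<psi>)) (\<lambda>t. Lambda a (Gamma0 \<psi>) t - \<psi> t)"
    using S.sk_xb unfolding xeq eeq .
  have "Gamma0a a \<psi> t = Lambda a (Gamma0 \<psi>) t" if t: "0 \<le> t" for t
    unfolding Gamma0a_def
  proof (rule the_equality)
    show "\<exists>\<phi> \<eta>. skorokhod a \<psi> \<phi> \<eta> \<and> \<phi> t = Lambda a (Gamma0 \<psi>) t" using sk by blast
    fix y assume "\<exists>\<phi> \<eta>. skorokhod a \<psi> \<phi> \<eta> \<and> \<phi> t = y"
    then obtain \<phi> \<eta> where "skorokhod a \<psi> \<phi> \<eta>" "\<phi> t = y" by blast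
    then show "y = Lambda a (Gamma0 \<psi>) t" using sk_unique[OF _ sk t] by blast
  qed
  then show ?thesis using sk by blast
qed


end
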